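(* Let $K\subset\mathbb{R}^n$ be a closed set whose complement $K^c$ is a bounded open set, and let $\alpha\ge0$, $\lambda>0$, $\mu\in(0,1]$ and $\alpha'$ with $0<\alpha'\le\alpha$ such that $r_\mu^{\alpha'}(K)>\alpha+\lambda$. Let $R_{\max}=R_{\max}(K)$ and $\tilde\mu=\tilde\mu_{\mu,\lambda}^{\alpha,\alpha'}(K)>0$. Then $$\Phi_K\Big(\frac{R_{\max}}{\tilde\mu^2},(K^{\oplus\alpha'})^c\Big)\subset\mathrm{ax}_\lambda^\alpha(K).$$
   Context: For a closed set $K\subset\mathbb{R}^n$ with bounded open complement: $R_K(x)=d(x,K)$; $\Theta_K(x)=\{y\in K:\|x-y\|=R_K(x)\}$; for bounded $S$, $\mathrm{center}(S)$ and $\mathrm{radius}(S)$ are the center and radius of the smallest ball enclosing $S$; $\mathcal F_K(x)=\mathrm{radius}(\Theta_K(x))$; for $x\notin K$, $\nabla_K(x)=(x-\mathrm{center}(\Theta_K(x)))/R_K(x)$. $\Phi_K:[0,\infty)\times K^c\to K^c$ is the flow of $\nabla_K$: the continuous (locally Lipschitz) semiflow with $\Phi_K(0,x)=x$, $\Phi_K(t_1,\Phi_K(t_2,x))=\Phi_K(t_1+t_2,x)$ and right derivative $\frac{d}{dt^+}\Phi_K(t,x)=\nabla_K(\Phi_K(t,x))$. $R_{\max}(K)=\max_{x\in K^c}R_K(x)$. Critical function: $\chi_K(t)=\inf\{\|\nabla_K(x)\|:R_K(x)=t\}$ for $t\in(0,R_{\max}(K)]$ (infimum of empty set $=1$). $K^{\oplus\alpha}=\{x:d(x,K)\le\alpha\}$.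 For $\mu\in(0,1]$, $\alpha\ge0$: $r_\mu^\alpha(K)=\inf\{t>\alpha:\chi_K(t)<\mu\}$. $\mathrm{ax}_\lambda^\alpha(K)=\{x:\mathcal F_{K^{\oplus\alpha}}(x)\ge\lambda\}$. $\tilde\mu_{\mu,\lambda}^{\alpha,\alpha'}(K)=\min\big(\mu,\sqrt{1-(\lambda/(r_\mu^{\alpha'}(K)-\alpha))^2}\big)$. *)

theory Defs
  imports "HOL-Analysis.Analysis"
begin

definition mradius :: "'a::euclidean_space set \<Rightarrow> real" where
  "mradius S = Inf {r. \<exists>c. S \<subseteq> cball c r}"

definition mcenter :: "'a::euclidean_space set \<Rightarrow> 'a" where
  "mcenter S = (THE c. S \<subseteq> cball c (mradius S))"

definition RK :: "'a::euclidean_space set \<Rightarrow> 'a \<Rightarrow> real" where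
  "RK K x = infdist x K"

definition ThetaK :: "'a::euclidean_space set \<Rightarrow> 'a \<Rightarrow> 'a set" where
  "ThetaK K x = {y \<in> K. dist x y = RK K x}"

definition FK :: "'a::euclidean_space set \<Rightarrow> 'a \<Rightarrow> real" where
  "FK K x = mradius (ThetaK K x)"

definition gradK :: "'a::euclidean_space set \<Rightarrow> 'a \<Rightarrow> 'a" where
  "gradK K x = (1 / RK K x) *\<^sub>R (x - mcenter (ThetaK K x))"

definition is_flowK :: "'a::euclidean_space set \<Rightarrow> (real \<Rightarrow> 'a \<Rightarrow> 'a) \<Rightarrow> bool" where
  "is_flowK K \<Phi> \<longleftrightarrow>
     continuous_on ({0..} \<times> (- K)) (\<lambda>(t, x). \<Phi> t x) \<and>
     (\<forall>t\<ge>0. \<forall>x\<in>-K. \<Phi> t x \<in> - K) \<and>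
     (\<forall>x\<in>-K. \<Phi> 0 x = x) \<and>
     (\<forall>t1\<ge>0. \<forall>t2\<ge>0. \<forall>x\<in>-K. \<Phi> t1 (\<Phi> t2 x) = \<Phi> (t1 + t2) x) \<and>
     (\<forall>t\<ge>0. \<forall>x\<in>-K. ((\<lambda>s. \<Phi> s x) has_vector_derivative gradK K (\<Phi> t x)) (at t within {t..}))"

definition Rmax :: "'a::euclidean_space set \<Rightarrow> real" where
  "Rmax K = Sup (RK K ` (- K))"

definition chiK :: "'a::euclidean_space set \<Rightarrow> real \<Rightarrow> real" where
  "chiK K t = (if {x. RK K x = t} = {} then 1 else Inf ((\<lambda>x. norm (gradK K x)) ` {x. RK K x = t}))"

definition offset :: "'a::euclidean_space set \<Rightarrow> real \<Rightarrow> 'a set" where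
  "offset K \<alpha> = {x. infdist x K \<le> \<alpha>}"

text \<open>Infimum in the extended reals, so that \<open>inf \<emptyset> = \<infinity>\<close>.\<close>
definition r_mu :: "'a::euclidean_space set \<Rightarrow> real \<Rightarrow> real \<Rightarrow> ereal" where
  "r_mu K \<mu> \<alpha> = Inf (ereal ` {t. t > \<alpha> \<and> t \<le> Rmax K \<and> chiK K t < \<mu>})"

definition axis :: "'a::euclidean_space set \<Rightarrow> real \<Rightarrow> real \<Rightarrow> 'a set" where
  "axis K lam \<alpha> = {x. FK (offset K \<alpha>) x \<ge> lam}"

definition mu_tilde :: "'a::euclidean_space set \<Rightarrow> real \<Rightarrow> real \<Rightarrow> real \<Rightarrow> real \<Rightarrow> real" where
  "mu_tilde K \<mu> lam \<alpha> \<alpha>' =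
     (if r_mu K \<mu> \<alpha>' = \<infinity> then \<mu>
      else min \<mu> (sqrt (1 - (lam / (real_of_ereal (r_mu K \<mu> \<alpha>') - \<alpha>))\<^sup>2)))"

end

theory Submission
  imports Defs
begin


definition hmax :: "'a::euclidean_space set \<Rightarrow> 'a \<Rightarrow> real" where
  "hmax S c = Sup ((\<lambda>z. dist c z) ` S)"

lemma hmax_ge:
  assumes "bounded S" "z \<in> S" shows "dist c z \<le> hmax S c"
proof -
  obtain e where "\<forall>z\<in>S. dist c z \<le> e" using bounded_any_center assms(1) by blast
  then have "bdd_above ((\<lambda>z. dist c z) ` S)" by (auto intro: bdd_aboveI2)
  then show ?thesis unfolding hmax_def using assms(2) by (simp add: cSup_upper)
qed

lemma hmax_le:
  assumes "S \<noteq> {}" "\<forall>z\<in>S. dist c z \<le> r" shows "hmax S c \<le> r"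
  unfolding hmax_def using assms by (auto intro!: cSup_least)

lemma hmax_lip:
  assumes "S \<noteq> {}" "bounded S" shows "hmax S c \<le> dist c c' + hmax S c'"
proof (rule hmax_le[OF assms(1)], intro ballI)
  fix z assume "z \<in> S"
  have "dist c z \<le> dist c c' + dist c' z" by (rule dist_triangle)
  also have "\<dots> \<le> dist c c' + hmax S c'" using hmax_ge[OF assms(2) \<open>z \<in> S\<close>] by simp
  finally show "dist c z \<le> dist c c' + hmax S c'" .
qed

lemma hmax_cont:
  assumes "S \<noteq> {}" "bounded S" shows "continuous_on UNIV (hmax S)"
proof -
  have "\<bar>hmax S c - hmax S c'\<bar> \<le> dist c c'" for c c'
    using hmax_lip[OF assms, of c c'] hmax_lip[OF assms, of c' c] by (simp add: dist_commute)
  then show ?thesis unfolding continuous_on_iff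
    by (metis dist_real_def le_less_trans)
qed

lemma hmax_cball: "bounded S \<Longrightarrow> S \<subseteq> cball c (hmax S c)"
  using hmax_ge by (auto simp: subset_iff)

lemma hmax_min_exists:
  assumes "S \<noteq> {}" "bounded S" shows "\<exists>c. \<forall>c'. hmax S c \<le> hmax S c'"
proof -
  obtain z0 where z0: "z0 \<in> S" using assms(1) by blast
  define D where "D = hmax S z0"
  have "compact (cball z0 D)" by simp
  moreover have "cball z0 D \<noteq> {}" using hmax_ge[OF assms(2) z0, of z0] D_def by auto
  ultimately obtain c where c: "c \<in> cball z0 D" "\<forall>y\<in>cball z0 D. hmax S c \<le> hmax S y"
    using continuous_attains_inf[of "cball z0 D" "hmax S"]
      continuous_on_subset[OF hmax_cont[OF assms]] by blast
  have "hmax S c \<le> hmax S c'" for c'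
  proof (cases "c' \<in> cball z0 D")
    case True then show ?thesis using c by auto
  next
    case False
    then have "D < dist z0 c'" by auto
    also have "\<dots> \<le> hmax S c'" using hmax_ge[OF assms(2) z0, of c'] by (simp add: dist_commute)
    finally show ?thesis using c(2)[rule_format, of z0] D_def hmax_ge[OF assms(2) z0, of z0] by auto
  qed
  then show ?thesis by blast
qed

lemma mradius_eq:
  assumes "S \<noteq> {}" "bounded S" "\<forall>c'. hmax S c \<le> hmax S c'"
  shows "mradius S = hmax S c"
  unfolding mradius_def
proof (rule cInf_eq_minimum)
  show "hmax S c \<in> {r. \<exists>c. S \<subseteq> cball c r}" using hmax_cball[OF assms(2)] by blast
  fix r assume "r \<in> {r. \<exists>c. S \<subseteq> cball c r}"
  then obtain c' where "S \<subseteq> cball c' r" by blast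
  then have "hmax S c' \<le> r" by (intro hmax_le[OF assms(1)]) auto
  then show "hmax S c \<le> r" using assms(3) by (meson order_trans)
qed

lemma midpoint_norm_identity:
  fixes z c1 c2 :: "'a::euclidean_space"
  shows "(norm (z - (1/2) *\<^sub>R (c1 + c2)))\<^sup>2 =
    ((norm (z - c1))\<^sup>2 + (norm (z - c2))\<^sup>2) / 2 - (norm (c1 - c2))\<^sup>2 / 4"
  apply (simp add: power2_norm_eq_inner inner_diff_left inner_diff_right inner_add_left
      inner_add_right inner_commute algebra_simps)
  apply (simp add: field_simps)
  done

lemma mball_props:
  assumes "S \<noteq> {}" "bounded S"
  shows "S \<subseteq> cball (mcenter S) (mradius S)"
    and "\<And>c r. S \<subseteq> cball c r \<Longrightarrow> mradius S \<le> r"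
    and "mradius S \<ge> 0"
    and "\<And>c. S \<subseteq> cball c (mradius S) \<Longrightarrow> c = mcenter S"
proof -
  obtain c where c: "\<forall>c'. hmax S c \<le> hmax S c'" using hmax_min_exists[OF assms] by blast
  have rad: "mradius S = hmax S c" using mradius_eq[OF assms c] .
  have minr: "mradius S \<le> r" if "S \<subseteq> cball c' r" for c' r
  proof -
    have "hmax S c' \<le> r" using that by (intro hmax_le[OF assms(1)]) auto
    then show ?thesis using rad c[rule_format, of c'] by linarith
  qed
  have nn: "mradius S \<ge> 0"
    using assms(1) hmax_ge[OF assms(2), of _ c] rad by (metis all_not_in_conv order_trans zero_le_dist)
  have uniq: "c1 = c2" if h1: "S \<subseteq> cball c1 (mradius S)" and h2: "S \<subseteq> cball c2 (mradius S)" for c1 c2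
  proof (rule ccontr)
    assume ne: "c1 \<noteq> c2"
    define \<rho> where "\<rho> = mradius S"
    define m where "m = (1/2) *\<^sub>R (c1 + c2)"
    have dpos: "(norm (c1 - c2))\<^sup>2 > 0" using ne by simp
    have "S \<subseteq> cball m (sqrt (\<rho>\<^sup>2 - (norm (c1 - c2))\<^sup>2 / 4))"
    proof
      fix z assume z: "z \<in> S"
      have a: "norm (z - c1) \<le> \<rho>" using h1 z \<rho>_def by (auto simp: dist_norm norm_minus_commute)
      have b: "norm (z - c2) \<le> \<rho>" using h2 z \<rho>_def by (auto simp: dist_norm norm_minus_commute)
      have "(norm (z - m))\<^sup>2 \<le> \<rho>\<^sup>2 - (norm (c1 - c2))\<^sup>2 / 4"
        using midpoint_norm_identity[of z c1 c2] a b m_def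
          power_mono[OF a norm_ge_zero, of 2] power_mono[OF b norm_ge_zero, of 2] by simp
      then have "norm (z - m) \<le> sqrt (\<rho>\<^sup>2 - (norm (c1 - c2))\<^sup>2 / 4)"
        by (simp add: real_le_rsqrt)
      then show "z \<in> cball m (sqrt (\<rho>\<^sup>2 - (norm (c1 - c2))\<^sup>2 / 4))"
        by (simp add: dist_norm norm_minus_commute)
    qed
    then have "\<rho> \<le> sqrt (\<rho>\<^sup>2 - (norm (c1 - c2))\<^sup>2 / 4)" using minr \<rho>_def by blast
    then have "\<rho>\<^sup>2 \<le> \<rho>\<^sup>2 - (norm (c1 - c2))\<^sup>2 / 4"
      using nn \<rho>_def by (metis power_mono real_sqrt_pow2 real_sqrt_ge_0_iff order_trans zero_le_power2 not_le
          less_eq_real_def)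
    then show False using dpos by simp
  qed
  have inball: "S \<subseteq> cball c (mradius S)" using hmax_cball[OF assms(2)] rad by simp
  have "mcenter S = c" unfolding mcenter_def
    using inball uniq by (intro the_equality) auto
  then show "S \<subseteq> cball (mcenter S) (mradius S)" using inball by simp
  show "\<And>c r. S \<subseteq> cball c r \<Longrightarrow> mradius S \<le> r" using minr by blast
  show "mradius S \<ge> 0" using nn .
  show "\<And>c'. S \<subseteq> cball c' (mradius S) \<Longrightarrow> c' = mcenter S"
    using uniq inball \<open>mcenter S = c\<close> by blast
qed



lemma norm_sq_add_expand:
  fixes a b :: "'a::euclidean_space"
  shows "(norm (a + b))\<^sup>2 = (norm a)\<^sup>2 + 2 * inner a b + (norm b)\<^sup>2"
  by (simp add: power2_norm_eq_inner inner_add_left inner_add_right inner_commute)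

lemma sq_le_of_le_sqrt:
  fixes r X :: real
  assumes "0 \<le> r" "r \<le> sqrt X" shows "r\<^sup>2 \<le> X"
proof -
  have "X \<ge> 0" using assms by (metis order_trans real_sqrt_ge_0_iff not_le real_sqrt_lt_0_iff)
  then have "r\<^sup>2 \<le> (sqrt X)\<^sup>2" using assms by (intro power_mono) auto
  then show ?thesis using \<open>X \<ge> 0\<close> by simp
qed

lemma center_dir:
  fixes S :: "'a::euclidean_space set"
  assumes "S \<noteq> {}" "compact S"
  shows "\<exists>z\<in>S. inner (z - mcenter S) w \<ge> 0"
proof (rule ccontr)
  assume "\<not> ?thesis"
  then have neg: "\<forall>z\<in>S. inner (z - mcenter S) w < 0" by (auto simp: not_le)
  define c where "c = mcenter S"
  define \<rho> where "\<rho> = mradius S"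
  have bS: "bounded S" using assms(2) compact_imp_bounded by blast
  have cont: "continuous_on S (\<lambda>z. inner (z - c) w)" by (intro continuous_intros)
  obtain z1 where z1: "z1 \<in> S" "\<forall>z\<in>S. inner (z - c) w \<le> inner (z1 - c) w"
    using continuous_attains_sup[OF assms(2) assms(1) cont] by blast
  define \<delta> where "\<delta> = - inner (z1 - c) w"
  have dpos: "\<delta> > 0" using neg z1(1) \<delta>_def c_def by auto
  have wne: "w \<noteq> 0" using dpos \<delta>_def by auto
  then have wpos: "(norm w)\<^sup>2 > 0" by simp
  define \<epsilon> where "\<epsilon> = \<delta> / (norm w)\<^sup>2"
  have epos: "\<epsilon> > 0" using dpos wpos \<epsilon>_def by simp
  define c' where "c' = c - \<epsilon> *\<^sub>R w"
  have key: "(norm (z - c'))\<^sup>2 \<le> \<rho>\<^sup>2 - \<delta>\<^sup>2 / (norm w)\<^sup>2" if z: "z \<in> S" for z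
  proof -
    have e: "z - c' = (z - c) + \<epsilon> *\<^sub>R w" using c'_def by simp
    have "(norm (z - c'))\<^sup>2 = (norm (z - c))\<^sup>2 + 2 * \<epsilon> * inner (z - c) w + \<epsilon>\<^sup>2 * (norm w)\<^sup>2"
      unfolding e norm_sq_add_expand by (simp add: power_mult_distrib mult.assoc)
    also have "\<dots> \<le> \<rho>\<^sup>2 + 2 * \<epsilon> * (-\<delta>) + \<epsilon>\<^sup>2 * (norm w)\<^sup>2"
    proof -
      have "norm (z - c) \<le> \<rho>"
        using mball_props(1)[OF assms(1) bS] z c_def \<rho>_def by (auto simp: dist_norm norm_minus_commute)
      then have "(norm (z - c))\<^sup>2 \<le> \<rho>\<^sup>2" by (simp add: power_mono)
      moreover have "inner (z - c) w \<le> -\<delta>" using z1(2) z \<delta>_def by auto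
      ultimately have "2 * \<epsilon> * inner (z - c) w \<le> 2 * \<epsilon> * (-\<delta>)" using epos by (intro mult_left_mono) auto
      then show ?thesis using \<open>(norm (z - c))\<^sup>2 \<le> \<rho>\<^sup>2\<close> by linarith
    qed
    also have "\<dots> = \<rho>\<^sup>2 - \<delta>\<^sup>2 / (norm w)\<^sup>2" using wpos \<epsilon>_def by (simp add: field_simps power2_eq_square)
    finally show ?thesis .
  qed
  have "S \<subseteq> cball c' (sqrt (\<rho>\<^sup>2 - \<delta>\<^sup>2 / (norm w)\<^sup>2))"
  proof
    fix z assume "z \<in> S"
    then have "norm (z - c') \<le> sqrt (\<rho>\<^sup>2 - \<delta>\<^sup>2 / (norm w)\<^sup>2)" using key real_le_rsqrt by blast
    then show "z \<in> cball c' (sqrt (\<rho>\<^sup>2 - \<delta>\<^sup>2 / (norm w)\<^sup>2))" by (simp add: dist_norm norm_minus_commute)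
  qed
  then have "\<rho> \<le> sqrt (\<rho>\<^sup>2 - \<delta>\<^sup>2 / (norm w)\<^sup>2)" using mball_props(2)[OF assms(1) bS] \<rho>_def by blast
  moreover have "\<rho> \<ge> 0" using mball_props(3)[OF assms(1) bS] \<rho>_def by simp
  ultimately have "\<rho>\<^sup>2 \<le> \<rho>\<^sup>2 - \<delta>\<^sup>2 / (norm w)\<^sup>2"
    using sq_le_of_le_sqrt by blast
  moreover have "\<delta>\<^sup>2 / (norm w)\<^sup>2 > 0" using dpos wpos by simp
  ultimately show False by simp
qed

lemma center_in_hull:
  fixes S :: "'a::euclidean_space set"
  assumes "S \<noteq> {}" "compact S"
  shows "mcenter S \<in> convex hull S"
proof (rule ccontr)
  assume nin: "mcenter S \<notin> convex hull S"
  have "closed (convex hull S)" using compact_convex_hull[OF assms(2)] compact_imp_closed by blast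
  then obtain a b where ab: "inner a (mcenter S) < b" "\<forall>x\<in>convex hull S. b < inner a x"
    using separating_hyperplane_closed_point[OF convex_convex_hull _ nin] by blast
  obtain z where z: "z \<in> S" "inner (z - mcenter S) (-a) \<ge> 0" using center_dir[OF assms, of "-a"] by blast
  have "z \<in> convex hull S" using z(1) by (rule hull_inc)
  then have "b < inner a z" using ab(2) by blast
  moreover have "inner (z - mcenter S) (-a) = inner a (mcenter S) - inner a z"
    by (simp add: inner_diff_left inner_commute[of z a] inner_commute[of "mcenter S" a])
  ultimately show False using z(2) ab(1) by linarith
qed

lemma center_sphere_eq:
  fixes S :: "'a::euclidean_space set"
  assumes "S \<noteq> {}" "compact S" "S \<subseteq> sphere x R"
  shows "(mradius S)\<^sup>2 + (norm (x - mcenter S))\<^sup>2 = R\<^sup>2"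
proof -
  define c where "c = mcenter S"
  define \<rho> where "\<rho> = mradius S"
  have bS: "bounded S" using assms(2) compact_imp_bounded by blast
  have inb: "S \<subseteq> cball c \<rho>" using mball_props(1)[OF assms(1) bS] c_def \<rho>_def by simp
  have rnn: "\<rho> \<ge> 0" using mball_props(3)[OF assms(1) bS] \<rho>_def by simp
  obtain z0 where z0: "z0 \<in> S" using assms(1) by blast
  have "dist x z0 = R" using assms(3) z0 by auto
  then have Rnn: "R \<ge> 0" by (metis zero_le_dist)
  have onS: "norm (z - x) = R" if "z \<in> S" for z using assms(3) that by (auto simp: dist_norm norm_minus_commute)
  have inc: "norm (z - c) \<le> \<rho>" if "z \<in> S" for z using inb that by (auto simp: dist_norm norm_minus_commute)
  show ?thesis
  proof (cases "x = c")
    case True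
    have "S \<subseteq> cball x R" using assms(3) by auto
    then have "\<rho> \<le> R" using mball_props(2)[OF assms(1) bS, of x R] \<rho>_def by auto
    moreover have "R \<le> \<rho>" using onS[OF z0] inc[OF z0] True by simp
    ultimately show ?thesis using True c_def \<rho>_def by simp
  next
    case False
    define n where "n = norm (x - c)"
    have npos: "n > 0" using False n_def by simp
    define e where "e = (1/n) *\<^sub>R (c - x)"
    have enorm: "norm e = 1" using npos n_def e_def by (simp add: norm_minus_commute)
    define d where "d = (R\<^sup>2 + n\<^sup>2 - \<rho>\<^sup>2) / (2 * n)"
    have ge: "inner (z - x) e \<ge> d" if z: "z \<in> S" for z
    proof -
      have "z - c = (z - x) + (x - c)" by simp
      then have "(norm (z - c))\<^sup>2 = R\<^sup>2 + 2 * inner (z - x) (x - c) + n\<^sup>2"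
        using norm_sq_add_expand[of "z - x" "x - c"] onS[OF z] n_def by simp
      moreover have "inner (z - x) (x - c) = - n * inner (z - x) e"
      proof -
        have "(- n) *\<^sub>R e = (- (n * (1/n))) *\<^sub>R (c - x)" unfolding e_def by (simp only: scaleR_scaleR mult_minus_left)
        then have "x - c = (- n) *\<^sub>R e" using npos by simp
        then show ?thesis by simp
      qed
      moreover have "(norm (z - c))\<^sup>2 \<le> \<rho>\<^sup>2" using inc[OF z] by (simp add: power_mono)
      ultimately have "R\<^sup>2 + n\<^sup>2 - \<rho>\<^sup>2 \<le> 2 * n * inner (z - x) e" by simp
      moreover have "d * (2 * n) = R\<^sup>2 + n\<^sup>2 - \<rho>\<^sup>2" using npos d_def by simp
      ultimately have "d * (2 * n) \<le> inner (z - x) e * (2 * n)" by (simp add: mult.commute)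
      then show ?thesis using npos by (meson mult_right_le_imp_le zero_less_mult_iff zero_less_numeral)
    qed
    define p where "p = x + d *\<^sub>R e"
    have pz: "(norm (z - p))\<^sup>2 \<le> R\<^sup>2 - d\<^sup>2" if z: "z \<in> S" for z
    proof -
      have ez: "z - p = (z - x) + (- d) *\<^sub>R e" using p_def by simp
      have A: "(norm (z - p))\<^sup>2 = R\<^sup>2 - 2 * d * inner (z - x) e + d\<^sup>2"
        unfolding ez norm_sq_add_expand using onS[OF z] enorm by (simp add: power_mult_distrib)
      have B: "2 * d * inner (z - x) e \<ge> 2 * d * d"
      proof -
        have "S \<subseteq> cball x R" using assms(3) by auto
        then have "\<rho> \<le> R" using mball_props(2)[OF assms(1) bS, of x R] \<rho>_def by auto
        then have "\<rho>\<^sup>2 \<le> R\<^sup>2" using rnn by (simp add: power_mono)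
        then have "R\<^sup>2 + n\<^sup>2 - \<rho>\<^sup>2 \<ge> 0" by (simp add: add_increasing2)
        then have "d \<ge> 0" using npos d_def by (simp add: divide_nonneg_pos)
        then show ?thesis using ge[OF z] by (simp add: mult_left_mono)
      qed
      show ?thesis using A B by (simp add: power2_eq_square)
    qed
    have "S \<subseteq> cball p (sqrt (R\<^sup>2 - d\<^sup>2))"
    proof
      fix z assume "z \<in> S"
      then have "norm (z - p) \<le> sqrt (R\<^sup>2 - d\<^sup>2)" using pz real_le_rsqrt by blast
      then show "z \<in> cball p (sqrt (R\<^sup>2 - d\<^sup>2))" by (simp add: dist_norm norm_minus_commute)
    qed
    then have "\<rho> \<le> sqrt (R\<^sup>2 - d\<^sup>2)" using mball_props(2)[OF assms(1) bS] \<rho>_def by blast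
    moreover have "R\<^sup>2 - d\<^sup>2 \<ge> 0" using pz[OF z0] by (meson order_trans zero_le_power2)
    ultimately have "\<rho>\<^sup>2 \<le> R\<^sup>2 - d\<^sup>2" using rnn sq_le_of_le_sqrt by blast
    then have "d\<^sup>2 \<le> R\<^sup>2 - \<rho>\<^sup>2" by simp
    moreover have eqd: "R\<^sup>2 + n\<^sup>2 - \<rho>\<^sup>2 = d * (2 * n)" using npos d_def by simp
    ultimately have "(R\<^sup>2 + n\<^sup>2 - \<rho>\<^sup>2)\<^sup>2 \<le> 4 * n\<^sup>2 * (R\<^sup>2 - \<rho>\<^sup>2)"
    proof -
      assume h: "d\<^sup>2 \<le> R\<^sup>2 - \<rho>\<^sup>2"
      have "(R\<^sup>2 + n\<^sup>2 - \<rho>\<^sup>2)\<^sup>2 = (4 * n\<^sup>2) * d\<^sup>2" unfolding eqd by (simp add: power_mult_distrib)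
      also have "\<dots> \<le> (4 * n\<^sup>2) * (R\<^sup>2 - \<rho>\<^sup>2)" using h by (intro mult_left_mono) auto
      finally show ?thesis .
    qed
    then have "(R\<^sup>2 - \<rho>\<^sup>2 - n\<^sup>2)\<^sup>2 \<le> 0"
      by (simp add: power2_eq_square algebra_simps)
    then have "R\<^sup>2 - \<rho>\<^sup>2 - n\<^sup>2 = 0" by simp
    then show ?thesis using n_def c_def \<rho>_def by simp
  qed
qed

lemma center_sphere_inner:
  fixes S :: "'a::euclidean_space set"
  assumes "S \<noteq> {}" "compact S" "S \<subseteq> sphere x R" "z \<in> S"
  shows "inner (x - mcenter S) (x - z) \<ge> (norm (x - mcenter S))\<^sup>2"
proof -
  define c where "c = mcenter S"
  define u where "u = x - c"
  have bS: "bounded S" using assms(2) compact_imp_bounded by blast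
  have eq: "(mradius S)\<^sup>2 + (norm u)\<^sup>2 = R\<^sup>2" using center_sphere_eq[OF assms(1-3)] u_def c_def by simp
  have "norm (z - c) \<le> mradius S"
    using mball_props(1)[OF assms(1) bS] assms(4) c_def by (auto simp: dist_norm norm_minus_commute)
  then have zc: "(norm (c - z))\<^sup>2 \<le> (mradius S)\<^sup>2" by (simp add: power_mono norm_minus_commute)
  have xz: "x - z = u + (c - z)" using u_def by simp
  have "norm (x - z) = R" using assms(3,4) by (auto simp: dist_norm)
  then have "R\<^sup>2 = (norm (x - z))\<^sup>2" by simp
  also have "\<dots> = (norm u)\<^sup>2 + 2 * inner u (c - z) + (norm (c - z))\<^sup>2"
    unfolding xz by (rule norm_sq_add_expand)
  finally have "R\<^sup>2 = (norm u)\<^sup>2 + 2 * inner u (c - z) + (norm (c - z))\<^sup>2" .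
  then have "inner u (c - z) \<ge> 0" using eq zc by linarith
  moreover have "inner u (x - z) = (norm u)\<^sup>2 + inner u (c - z)"
    unfolding xz by (simp only: inner_add_right power2_norm_eq_inner)
  ultimately show ?thesis using u_def c_def by simp
qed



lemma theta_sub: "ThetaK K x \<subseteq> K" "ThetaK K x \<subseteq> sphere x (RK K x)"
  unfolding ThetaK_def by auto

lemma theta_eq: "ThetaK K x = K \<inter> sphere x (RK K x)"
  unfolding ThetaK_def by auto

lemma theta_ne: assumes "closed K" "K \<noteq> {}" shows "ThetaK K x \<noteq> {}"
proof -
  obtain y where "y \<in> K" "infdist x K = dist x y" using infdist_attains_inf[OF assms] by blast
  then show ?thesis unfolding ThetaK_def RK_def by auto
qed

lemma theta_compact: assumes "closed K" shows "compact (ThetaK K x)"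
  unfolding theta_eq by (rule closed_Int_compact[OF assms compact_sphere])

lemma RK_pos: "closed K \<Longrightarrow> K \<noteq> {} \<Longrightarrow> x \<notin> K \<Longrightarrow> RK K x > 0"
  unfolding RK_def by (rule infdist_pos_not_in_closed)

lemma RK_le: "z \<in> K \<Longrightarrow> RK K x \<le> dist x z"
  unfolding RK_def by (rule infdist_le)

lemma RK_lip: "RK K x \<le> RK K y + dist x y"
  unfolding RK_def by (rule infdist_triangle)

lemma RK_cont: "continuous_on S (RK K)"
  unfolding RK_def by (intro continuous_intros)

lemma theta_dist: "z \<in> ThetaK K x \<Longrightarrow> dist x z = RK K x"
  unfolding ThetaK_def by auto

lemma FK_eq:
  assumes "closed K" "K \<noteq> {}"
  shows "(FK K x)\<^sup>2 + (norm (x - mcenter (ThetaK K x)))\<^sup>2 = (RK K x)\<^sup>2"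
  unfolding FK_def using center_sphere_eq[OF theta_ne[OF assms] theta_compact[OF assms(1)] theta_sub(2)] .

lemma theta_inner:
  assumes "closed K" "K \<noteq> {}" "z \<in> ThetaK K x"
  shows "inner (x - mcenter (ThetaK K x)) (x - z) \<ge> (norm (x - mcenter (ThetaK K x)))\<^sup>2"
  using center_sphere_inner[OF theta_ne[OF assms(1,2)] theta_compact[OF assms(1)] theta_sub(2) assms(3)] .

lemma FK_nonneg: assumes "closed K" "K \<noteq> {}" shows "FK K x \<ge> 0"
  unfolding FK_def using mball_props(3)[OF theta_ne[OF assms] compact_imp_bounded[OF theta_compact[OF assms(1)]]] .

lemma grad_norm: "norm (gradK K x) = norm (x - mcenter (ThetaK K x)) / RK K x"
  unfolding gradK_def RK_def by (simp add: infdist_nonneg)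

lemma theta_monotone:
  assumes "closed K" "K \<noteq> {}"
  shows "inner (mcenter (ThetaK K p) - mcenter (ThetaK K q)) (p - q) \<ge> 0"
proof -
  have base: "inner (zp - zq) (p - q) \<ge> 0" if zp: "zp \<in> ThetaK K p" and zq: "zq \<in> ThetaK K q" for zp zq
  proof -
    have "zq \<in> K" "zp \<in> K" using zp zq theta_sub(1) by auto
    have "dist p zp \<le> dist p zq" using theta_dist[OF zp] RK_le[OF \<open>zq \<in> K\<close>, of p] by simp
    then have "norm (p - zp) \<le> norm (p - zq)" by (simp only: dist_norm)
    then have 1: "(norm (p - zp))\<^sup>2 \<le> (norm (p - zq))\<^sup>2" by (rule power_mono) simp
    have "dist q zq \<le> dist q zp" using theta_dist[OF zq] RK_le[OF \<open>zp \<in> K\<close>, of q] by simp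
    then have "norm (q - zq) \<le> norm (q - zp)" by (simp only: dist_norm)
    then have 2: "(norm (q - zq))\<^sup>2 \<le> (norm (q - zp))\<^sup>2" by (rule power_mono) simp
    have e: "(norm (a - b))\<^sup>2 = (norm a)\<^sup>2 - 2 * inner a b + (norm b)\<^sup>2" for a b :: 'a
      by (simp add: power2_norm_eq_inner inner_diff_left inner_diff_right inner_commute[of b a])
    have f: "inner (zp - zq) (p - q) = inner p zp - inner q zp - inner p zq + inner q zq"
      by (simp add: inner_diff_left inner_diff_right inner_commute[of zp] inner_commute[of zq])
    show ?thesis using 1 2 unfolding e f by simp
  qed
  define cp where "cp = mcenter (ThetaK K p)"
  define cq where "cq = mcenter (ThetaK K q)"
  have cpin: "cp \<in> convex hull (ThetaK K p)"
    using center_in_hull[OF theta_ne[OF assms] theta_compact[OF assms(1)]] cp_def by simp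
  have cqin: "cq \<in> convex hull (ThetaK K q)"
    using center_in_hull[OF theta_ne[OF assms] theta_compact[OF assms(1)]] cq_def by simp
  have step1: "inner (cp - zq) (p - q) \<ge> 0" if zq: "zq \<in> ThetaK K q" for zq
  proof -
    have "ThetaK K p \<subseteq> {y. inner (p - q) y \<ge> inner (p - q) zq}"
    proof
      fix y assume "y \<in> ThetaK K p"
      then have "inner (y - zq) (p - q) \<ge> 0" using base[OF _ zq] by blast
      then show "y \<in> {y. inner (p - q) y \<ge> inner (p - q) zq}"
        by (simp add: inner_diff_left inner_commute[of y] inner_commute[of zq])
    qed
    moreover have "convex {y. inner (p - q) y \<ge> inner (p - q) zq}" by (rule convex_halfspace_ge)
    ultimately have "convex hull (ThetaK K p) \<subseteq> {y. inner (p - q) y \<ge> inner (p - q) zq}"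
      by (rule hull_minimal)
    then have "inner (p - q) cp \<ge> inner (p - q) zq" using cpin by blast
    then show ?thesis by (simp add: inner_diff_left inner_commute[of cp] inner_commute[of zq])
  qed
  have "ThetaK K q \<subseteq> {y. inner (p - q) y \<le> inner (p - q) cp}"
  proof
    fix y assume "y \<in> ThetaK K q"
    then have "inner (cp - y) (p - q) \<ge> 0" using step1 by blast
    then show "y \<in> {y. inner (p - q) y \<le> inner (p - q) cp}"
      by (simp add: inner_diff_left inner_commute[of y] inner_commute[of cp])
  qed
  moreover have "convex {y. inner (p - q) y \<le> inner (p - q) cp}" by (rule convex_halfspace_le)
  ultimately have "convex hull (ThetaK K q) \<subseteq> {y. inner (p - q) y \<le> inner (p - q) cp}"
    by (rule hull_minimal)
  then have "inner (p - q) cq \<le> inner (p - q) cp" using cqin by auto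
  then show ?thesis unfolding cp_def[symmetric] cq_def[symmetric]
    by (simp add: inner_diff_left inner_commute[of cp] inner_commute[of cq])
qed

section \<open>Upper semicontinuity of Theta\<close>

lemma theta_usc:
  fixes K :: "'a::euclidean_space set" and h :: "'a \<Rightarrow> real"
  assumes K: "closed K" "K \<noteq> {}" and a: "a \<notin> K"
    and hc: "continuous_on K h" and hH: "\<forall>z\<in>ThetaK K a. h z \<ge> H" and e: "\<epsilon> > 0"
  shows "\<exists>\<rho>>0. \<rho> \<le> 1/2 \<and> (\<forall>b z. dist b a < \<rho> \<longrightarrow> z \<in> ThetaK K b \<longrightarrow> h z > H - \<epsilon>)"
proof -
  define Ra where "Ra = RK K a"
  define C where "C = {z \<in> K \<inter> cball a (Ra + 1). h z \<le> H - \<epsilon>}"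
  have closedKc: "closed (K \<inter> cball a (Ra + 1))" using K(1) by blast
  have hc': "continuous_on (K \<inter> cball a (Ra + 1)) h" using continuous_on_subset[OF hc] by blast
  have "closed C" unfolding C_def
    by (rule continuous_on_closed_Collect_le[OF hc' continuous_on_const closedKc])
  moreover have "C \<subseteq> cball a (Ra + 1)" unfolding C_def by blast
  then have "bounded C" using bounded_subset[OF bounded_cball] by blast
  ultimately have cC: "compact C" by (simp add: compact_eq_bounded_closed)
  have near: "dist a z \<le> Ra + 2 * dist b a" if "z \<in> ThetaK K b" for b z
  proof -
    have "dist a z \<le> dist a b + dist b z" by (rule dist_triangle)
    also have "dist b z = RK K b" using theta_dist[OF that] .
    also have "RK K b \<le> Ra + dist b a" using RK_lip[of K b a] Ra_def by simp
    finally show ?thesis by (simp add: dist_commute)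
  qed
  show ?thesis
  proof (cases "C = {}")
    case True
    show ?thesis
    proof (intro exI[of _ "1/4"] conjI allI impI)
      fix b z assume b: "dist b a < 1/4" and z: "z \<in> ThetaK K b"
      have "z \<in> K" using z theta_sub(1) by blast
      moreover have "dist a z \<le> Ra + 1" using near[OF z] b by simp
      ultimately have "z \<in> K \<inter> cball a (Ra + 1)" by simp
      then have "z \<notin> C \<Longrightarrow> h z > H - \<epsilon>" unfolding C_def by (simp add: not_le)
      then show "h z > H - \<epsilon>" using True by blast
    qed auto
  next
    case False
    have dc: "continuous_on C (\<lambda>z. dist a z - Ra)" by (intro continuous_intros)
    obtain z0 where z0: "z0 \<in> C" "\<forall>z\<in>C. dist a z0 - Ra \<le> dist a z - Ra"
      using continuous_attains_inf[OF cC False dc] by blast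
    define \<gamma> where "\<gamma> = dist a z0 - Ra"
    have "z0 \<in> K" using z0(1) C_def by auto
    then have "dist a z0 \<ge> Ra" using RK_le Ra_def by blast
    moreover have "dist a z0 \<noteq> Ra"
    proof
      assume "dist a z0 = Ra"
      then have "z0 \<in> ThetaK K a" using \<open>z0 \<in> K\<close> Ra_def unfolding ThetaK_def by auto
      then have "h z0 \<ge> H" using hH by blast
      then show False using z0(1) e C_def by auto
    qed
    ultimately have gpos: "\<gamma> > 0" using \<gamma>_def by simp
    show ?thesis
    proof (intro exI[of _ "min (1/4) (\<gamma>/4)"] conjI allI impI)
      fix b z assume b: "dist b a < min (1/4) (\<gamma>/4)" and z: "z \<in> ThetaK K b"
      have "z \<in> K" using z theta_sub(1) by blast
      have d: "dist a z \<le> Ra + 2 * dist b a" using near[OF z] .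
      then have "dist a z \<le> Ra + 1" using b by simp
      moreover have "dist a z - Ra < \<gamma>" using d b zero_le_dist[of b a] by linarith
      ultimately have "z \<notin> C"
      proof -
        assume "dist a z - Ra < \<gamma>"
        show "z \<notin> C"
        proof
          assume "z \<in> C"
          then have "dist a z0 - Ra \<le> dist a z - Ra" using z0(2) by blast
          then show False using \<open>dist a z - Ra < \<gamma>\<close> \<gamma>_def by linarith
        qed
      qed
      moreover have "z \<in> K \<inter> cball a (Ra + 1)" using \<open>z \<in> K\<close> \<open>dist a z \<le> Ra + 1\<close> by simp
      ultimately show "h z > H - \<epsilon>" unfolding C_def by (simp add: not_le)
    qed (use gpos in auto)
  qed
qed



definition dini_lb :: "(real \<Rightarrow> real) \<Rightarrow> real \<Rightarrow> real \<Rightarrow> bool" where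
  "dini_lb f t m \<longleftrightarrow> (\<forall>\<epsilon>>0. eventually (\<lambda>s. f t + (s - t) * (m - \<epsilon>) \<le> f s) (at_right t))"

lemma dini_mono:
  assumes "dini_lb f t m" "m' \<le> m" shows "dini_lb f t m'"
  unfolding dini_lb_def
proof (intro allI impI)
  fix \<epsilon> :: real assume e: "\<epsilon> > 0"
  have "eventually (\<lambda>s. f t + (s - t) * (m - \<epsilon>) \<le> f s) (at_right t)"
    using assms(1) e unfolding dini_lb_def by blast
  moreover have "eventually (\<lambda>s. t < s) (at_right t)" by (rule eventually_at_right_less)
  ultimately show "eventually (\<lambda>s. f t + (s - t) * (m' - \<epsilon>) \<le> f s) (at_right t)"
  proof (rule eventually_elim2)
    fix s assume h: "f t + (s - t) * (m - \<epsilon>) \<le> f s" and st: "t < s"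
    have "(s - t) * (m' - \<epsilon>) \<le> (s - t) * (m - \<epsilon>)" using st assms(2) by (intro mult_left_mono) auto
    then show "f t + (s - t) * (m' - \<epsilon>) \<le> f s" using h by linarith
  qed
qed

lemma dini_add:
  assumes "dini_lb f t m1" "dini_lb g t m2" shows "dini_lb (\<lambda>s. f s + g s) t (m1 + m2)"
  unfolding dini_lb_def
proof (intro allI impI)
  fix \<epsilon> :: real assume e: "\<epsilon> > 0"
  have "eventually (\<lambda>s. f t + (s - t) * (m1 - \<epsilon>/2) \<le> f s) (at_right t)"
    using assms(1) e unfolding dini_lb_def by simp
  moreover have "eventually (\<lambda>s. g t + (s - t) * (m2 - \<epsilon>/2) \<le> g s) (at_right t)"
    using assms(2) e unfolding dini_lb_def by simp
  ultimately show "eventually (\<lambda>s. f t + g t + (s - t) * (m1 + m2 - \<epsilon>) \<le> f s + g s) (at_right t)"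
  proof (rule eventually_elim2)
    fix s assume "f t + (s - t) * (m1 - \<epsilon>/2) \<le> f s" "g t + (s - t) * (m2 - \<epsilon>/2) \<le> g s"
    moreover have "(s - t) * (m1 + m2 - \<epsilon>) = (s - t) * (m1 - \<epsilon>/2) + (s - t) * (m2 - \<epsilon>/2)"
      by (simp add: algebra_simps)
    ultimately show "f t + g t + (s - t) * (m1 + m2 - \<epsilon>) \<le> f s + g s" by linarith
  qed
qed

lemma dini_deriv:
  assumes "(f has_real_derivative D) (at t within {t..})" shows "dini_lb f t D"
  unfolding dini_lb_def
proof (intro allI impI)
  fix \<epsilon> :: real assume e: "\<epsilon> > 0"
  have "((\<lambda>y. (f y - f t) / (y - t)) \<longlongrightarrow> D) (at_right t)"
    using assms unfolding has_field_derivative_iff at_within_Ici_at_right .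
  then have "eventually (\<lambda>y. dist ((f y - f t) / (y - t)) D < \<epsilon>) (at_right t)"
    using e by (rule tendstoD)
  moreover have "eventually (\<lambda>s. t < s) (at_right t)" by (rule eventually_at_right_less)
  ultimately show "eventually (\<lambda>s. f t + (s - t) * (D - \<epsilon>) \<le> f s) (at_right t)"
  proof (rule eventually_elim2)
    fix s assume h: "dist ((f s - f t) / (s - t)) D < \<epsilon>" and st: "t < s"
    then have "D - \<epsilon> \<le> (f s - f t) / (s - t)" by (simp add: dist_real_def abs_less_iff)
    then have "(s - t) * (D - \<epsilon>) \<le> (s - t) * ((f s - f t) / (s - t))" using st by (intro mult_left_mono) auto
    also have "\<dots> = f s - f t" using st by simp
    finally show "f t + (s - t) * (D - \<epsilon>) \<le> f s" by simp
  qed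
qed

lemma cmp:
  fixes f :: "real \<Rightarrow> real"
  assumes ab: "a \<le> b" and cont: "continuous_on {a..b} f"
    and d: "\<And>t. a \<le> t \<Longrightarrow> t < b \<Longrightarrow> dini_lb f t 0"
  shows "f a \<le> f b"
proof (rule ccontr)
  assume "\<not> f a \<le> f b"
  then have lt: "f b < f a" by simp
  have ab': "a < b" using ab lt by (cases "a = b") auto
  define \<epsilon> where "\<epsilon> = (f a - f b) / (2 * (b - a))"
  have epos: "\<epsilon> > 0" using lt ab' \<epsilon>_def by simp
  define g where "g t = f t - f a + \<epsilon> * (t - a)" for t
  have ga: "g a = 0" using g_def by simp
  have "\<epsilon> * (b - a) = (f a - f b) / 2" using ab' \<epsilon>_def by (simp add: field_simps)
  then have gb: "g b < 0" using g_def lt by simp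
  have gcont: "continuous_on {a..b} g" unfolding g_def by (intro continuous_intros cont)
  define N where "N = {t\<in>{a..b}. g t < 0}"
  have bN: "b \<in> N" using gb ab N_def by simp
  have Nbdd: "bdd_below N" unfolding N_def by (rule bdd_belowI[of _ a]) auto
  define s where "s = Inf N"
  have sN: "\<forall>n\<in>N. s \<le> n" using Nbdd s_def by (simp add: cInf_lower)
  have as: "a \<le> s" unfolding s_def using bN N_def by (intro cInf_greatest) auto
  have sb: "s \<le> b" using sN bN by simp
  have gs: "g s \<ge> 0"
  proof (rule ccontr)
    assume "\<not> 0 \<le> g s"
    then have gsn: "g s < 0" by simp
    then have "s \<noteq> a" using ga by auto
    then have as': "a < s" using as by simp
    have "s \<in> {a..b}" using as sb by simp
    then obtain dd where dd: "dd > 0" "\<forall>x'\<in>{a..b}. dist x' s < dd \<longrightarrow> dist (g x') (g s) < - g s"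
      using gcont gsn unfolding continuous_on_iff by (meson neg_0_less_iff_less)
    define t where "t = max a (s - dd/2)"
    have tin: "t \<in> {a..b}" using t_def as' sb dd by auto
    have "dist t s < dd" using t_def as' dd by (auto simp: dist_real_def)
    then have "dist (g t) (g s) < - g s" using dd tin by blast
    then have "g t < 0" by (simp add: dist_real_def abs_less_iff)
    then have "t \<in> N" using tin N_def by simp
    moreover have "t < s" using t_def as' dd by simp
    ultimately show False using sN by fastforce
  qed
  have sb': "s < b" using gs gb sb by (cases "s = b") auto
  have "eventually (\<lambda>r. f s + (r - s) * (0 - \<epsilon>/2) \<le> f r) (at_right s)"
    using d[OF as sb'] epos unfolding dini_lb_def by (metis half_gt_zero)
  then obtain b' where b': "b' > s" "\<forall>r>s. r < b' \<longrightarrow> f s + (r - s) * (0 - \<epsilon>/2) \<le> f r"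
    unfolding eventually_at_right_field by blast
  define b'' where "b'' = min b' b"
  have "\<forall>n\<in>N. b'' \<le> n"
  proof
    fix n assume nN: "n \<in> N"
    show "b'' \<le> n"
    proof (rule ccontr)
      assume "\<not> b'' \<le> n"
      then have nb: "n < b'" "n < b" using b''_def by auto
      have "s \<le> n" using sN nN by blast
      moreover have "n \<noteq> s" using nN gs N_def by auto
      ultimately have sn: "s < n" by simp
      have "f s + (n - s) * (0 - \<epsilon>/2) \<le> f n" using b'(2) sn nb by blast
      then have "g n \<ge> g s + \<epsilon> * (n - s) - (n - s) * (\<epsilon>/2)" unfolding g_def by (simp add: algebra_simps)
      moreover have "\<epsilon> * (n - s) - (n - s) * (\<epsilon>/2) \<ge> 0"
      proof -
        have "(n - s) * \<epsilon> > 0" using sn epos by simp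
        moreover have "\<epsilon> * (n - s) - (n - s) * (\<epsilon>/2) = ((n - s) * \<epsilon>) / 2" by (simp add: field_simps)
        ultimately show ?thesis by (simp add: mult.commute)
      qed
      ultimately have "g n \<ge> 0" using gs by linarith
      then show False using nN N_def by simp
    qed
  qed
  then have "b'' \<le> s" unfolding s_def using bN by (intro cInf_greatest) auto
  moreover have "s < b''" using b'(1) sb' b''_def by simp
  ultimately show False by simp
qed

lemma vderiv_approx:
  assumes "(w has_vector_derivative v) (at t within {t..})" "\<eta> > 0"
  shows "eventually (\<lambda>s. norm (w s - w t - (s - t) *\<^sub>R v) \<le> \<eta> * (s - t)) (at_right t)"
proof -
  have "eventually (\<lambda>s. norm (w s - w t - (s - t) *\<^sub>R v) \<le> \<eta> * norm (s - t)) (at_right t)"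
    using assms unfolding has_vector_derivative_def has_derivative_within_alt2 at_within_Ici_at_right
    by blast
  moreover have "eventually (\<lambda>s. t < s) (at_right t)" by (rule eventually_at_right_less)
  ultimately show ?thesis by eventually_elim simp
qed

lemma vderiv_near:
  assumes "(w has_vector_derivative v) (at t within {t..})" "\<rho> > 0"
  shows "eventually (\<lambda>s. dist (w s) (w t) < \<rho>) (at_right t)"
proof -
  have "continuous (at t within {t..}) w" using assms(1) by (rule has_vector_derivative_continuous)
  then have "(w \<longlongrightarrow> w t) (at_right t)" unfolding continuous_within at_within_Ici_at_right .
  then show ?thesis using assms(2) by (rule tendstoD)
qed



lemma dini_R2:
  fixes K :: "'a::euclidean_space set" and w :: "real \<Rightarrow> 'a"
  assumes K: "closed K" "K \<noteq> {}" and a: "w t \<notin> K"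
    and wd: "(w has_vector_derivative v) (at t within {t..})"
    and M: "\<forall>z\<in>ThetaK K (w t). inner v (w t - z) \<ge> M"
  shows "dini_lb (\<lambda>s. (RK K (w s))\<^sup>2) t (2 * M)"
  unfolding dini_lb_def
proof (intro allI impI)
  fix \<epsilon> :: real assume e: "\<epsilon> > 0"
  define a where "a = w t"
  define Ra where "Ra = RK K a"
  have Ra0: "Ra \<ge> 0" unfolding Ra_def RK_def by (simp add: infdist_nonneg)
  define \<eta> where "\<eta> = \<epsilon> / (4 * (Ra + 1))"
  have eta: "\<eta> > 0" using e Ra0 \<eta>_def by simp
  have hc: "continuous_on K (\<lambda>z. inner v (a - z))" by (intro continuous_intros)
  obtain \<rho> where rho: "\<rho> > 0" "\<rho> \<le> 1/2"
    "\<forall>b z. dist b a < \<rho> \<longrightarrow> z \<in> ThetaK K b \<longrightarrow> inner v (a - z) > M - \<epsilon>/4"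
    using theta_usc[OF K a[folded a_def] hc, of M "\<epsilon>/4"] M e a_def by auto
  have ev1: "eventually (\<lambda>s. norm (w s - a - (s - t) *\<^sub>R v) \<le> \<eta> * (s - t)) (at_right t)"
    using vderiv_approx[OF wd eta] a_def by simp
  have ev2: "eventually (\<lambda>s. dist (w s) a < \<rho>) (at_right t)"
    using vderiv_near[OF wd rho(1)] a_def by simp
  have ev3: "eventually (\<lambda>s. t < s) (at_right t)" by (rule eventually_at_right_less)
  show "eventually (\<lambda>s. (RK K (w t))\<^sup>2 + (s - t) * (2 * M - \<epsilon>) \<le> (RK K (w s))\<^sup>2) (at_right t)"
    using ev1 ev2 ev3
  proof eventually_elim
    case (elim s)
    define b where "b = w s"
    obtain z where z: "z \<in> ThetaK K b" using theta_ne[OF K] by blast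
    have zK: "z \<in> K" using z theta_sub(1) by blast
    have Rb: "RK K b = norm (b - z)" using theta_dist[OF z] by (simp add: dist_norm)
    have az: "norm (a - z) \<ge> Ra" using RK_le[OF zK, of a] Ra_def by (simp add: dist_norm)
    have az2: "norm (a - z) \<le> Ra + 1"
    proof -
      have "dist a z \<le> dist a b + dist b z" by (rule dist_triangle)
      also have "dist b z = RK K b" using theta_dist[OF z] .
      also have "RK K b \<le> Ra + dist b a" using RK_lip[of K b a] Ra_def by simp
      finally have "dist a z \<le> Ra + 2 * dist b a" by (simp add: dist_commute)
      then show ?thesis using elim(2) rho(2) b_def by (simp add: dist_norm)
    qed
    define ee where "ee = b - a - (s - t) *\<^sub>R v"
    have een: "norm ee \<le> \<eta> * (s - t)" using elim(1) ee_def b_def by simp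
    have bz: "b - z = (a - z) + (b - a)" by simp
    have "(RK K b)\<^sup>2 = (norm (a - z))\<^sup>2 + 2 * inner (a - z) (b - a) + (norm (b - a))\<^sup>2"
      unfolding Rb bz by (rule norm_sq_add_expand)
    moreover have "(norm (a - z))\<^sup>2 \<ge> Ra\<^sup>2" using az Ra0 by (simp add: power_mono)
    moreover have "inner (a - z) (b - a) = (s - t) * inner v (a - z) + inner (a - z) ee"
      unfolding ee_def by (simp add: inner_diff_right inner_commute algebra_simps)
    moreover have "inner v (a - z) > M - \<epsilon>/4" using rho(3) elim(2) z b_def by blast
    moreover have "inner (a - z) ee \<ge> - ((Ra + 1) * (\<eta> * (s - t)))"
    proof -
      have "\<bar>inner (a - z) ee\<bar> \<le> norm (a - z) * norm ee" by (rule Cauchy_Schwarz_ineq2)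
      also have "\<dots> \<le> (Ra + 1) * (\<eta> * (s - t))" using az2 een Ra0 by (intro mult_mono) auto
      finally show ?thesis by linarith
    qed
    ultimately have "(RK K b)\<^sup>2 \<ge> Ra\<^sup>2 + 2 * ((s - t) * (M - \<epsilon>/4)) - 2 * ((Ra + 1) * (\<eta> * (s - t)))"
    proof -
      assume h1: "(RK K b)\<^sup>2 = (norm (a - z))\<^sup>2 + 2 * inner (a - z) (b - a) + (norm (b - a))\<^sup>2"
        and h2: "(norm (a - z))\<^sup>2 \<ge> Ra\<^sup>2"
        and h3: "inner (a - z) (b - a) = (s - t) * inner v (a - z) + inner (a - z) ee"
        and h4: "inner v (a - z) > M - \<epsilon>/4"
        and h5: "inner (a - z) ee \<ge> - ((Ra + 1) * (\<eta> * (s - t)))"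
      have "(s - t) * inner v (a - z) \<ge> (s - t) * (M - \<epsilon>/4)" using h4 elim(3) by (intro mult_left_mono) auto
      then show ?thesis using h1 h2 h3 h5 zero_le_power2[of "norm (b - a)"] by linarith
    qed
    moreover have "2 * ((s - t) * (M - \<epsilon>/4)) - 2 * ((Ra + 1) * (\<eta> * (s - t))) = (s - t) * (2 * M - \<epsilon>)"
      unfolding \<eta>_def using Ra0 by (simp add: field_simps)
    ultimately have "Ra\<^sup>2 + (s - t) * (2 * M - \<epsilon>) \<le> (RK K b)\<^sup>2" by linarith
    then show ?case unfolding Ra_def a_def b_def .
  qed
qed

lemma dini_R:
  fixes K :: "'a::euclidean_space set" and w :: "real \<Rightarrow> 'a"
  assumes K: "closed K" "K \<noteq> {}" and a: "w t \<notin> K"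
    and wd: "(w has_vector_derivative v) (at t within {t..})"
    and M: "\<forall>z\<in>ThetaK K (w t). inner v (w t - z) \<ge> M"
  shows "dini_lb (\<lambda>s. RK K (w s)) t (M / RK K (w t))"
  unfolding dini_lb_def
proof (intro allI impI)
  fix \<epsilon> :: real assume e: "\<epsilon> > 0"
  define a where "a = w t"
  define Ra where "Ra = RK K a"
  have Rapos: "Ra > 0" using RK_pos[OF K a] a_def Ra_def by simp
  define \<eta> where "\<eta> = \<epsilon> / 2"
  have eta: "\<eta> > 0" using e \<eta>_def by simp
  have dnz: "\<forall>z\<in>K. dist a z \<noteq> 0" using a a_def by auto
  have hc: "continuous_on K (\<lambda>z. inner v (a - z) / dist a z)"
    using dnz by (intro continuous_intros) auto
  have hH: "\<forall>z\<in>ThetaK K a. inner v (a - z) / dist a z \<ge> M / Ra"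
  proof
    fix z assume z: "z \<in> ThetaK K a"
    have "dist a z = Ra" using theta_dist[OF z] Ra_def by simp
    then show "inner v (a - z) / dist a z \<ge> M / Ra" using M z a_def Rapos by (simp add: divide_right_mono)
  qed
  obtain \<rho> where rho: "\<rho> > 0" "\<rho> \<le> 1/2"
    "\<forall>b z. dist b a < \<rho> \<longrightarrow> z \<in> ThetaK K b \<longrightarrow> inner v (a - z) / dist a z > M / Ra - \<epsilon>/2"
    using theta_usc[OF K a[folded a_def] hc hH, of "\<epsilon>/2"] e by auto
  have ev1: "eventually (\<lambda>s. norm (w s - a - (s - t) *\<^sub>R v) \<le> \<eta> * (s - t)) (at_right t)"
    using vderiv_approx[OF wd eta] a_def by simp
  have ev2: "eventually (\<lambda>s. dist (w s) a < \<rho>) (at_right t)"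
    using vderiv_near[OF wd rho(1)] a_def by simp
  have ev3: "eventually (\<lambda>s. t < s) (at_right t)" by (rule eventually_at_right_less)
  show "eventually (\<lambda>s. RK K (w t) + (s - t) * (M / RK K (w t) - \<epsilon>) \<le> RK K (w s)) (at_right t)"
    using ev1 ev2 ev3
  proof eventually_elim
    case (elim s)
    define b where "b = w s"
    obtain z where z: "z \<in> ThetaK K b" using theta_ne[OF K] by blast
    have zK: "z \<in> K" using z theta_sub(1) by blast
    have Rb: "RK K b = norm (b - z)" using theta_dist[OF z] by (simp add: dist_norm)
    have az: "norm (a - z) \<ge> Ra" using RK_le[OF zK, of a] Ra_def by (simp add: dist_norm)
    have azp: "norm (a - z) > 0" using az Rapos by linarith
    define ee where "ee = b - a - (s - t) *\<^sub>R v"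
    have een: "norm ee \<le> \<eta> * (s - t)" using elim(1) ee_def b_def by simp
    have "inner (b - z) (a - z) \<le> norm (b - z) * norm (a - z)" by (rule norm_cauchy_schwarz)
    then have "RK K b \<ge> inner (b - z) (a - z) / norm (a - z)" unfolding Rb using azp
      by (simp add: divide_le_eq)
    moreover have "inner (b - z) (a - z) = (norm (a - z))\<^sup>2 + (s - t) * inner v (a - z) + inner ee (a - z)"
      unfolding ee_def by (simp add: inner_diff_left inner_diff_right power2_norm_eq_inner inner_commute algebra_simps)
    ultimately have "RK K b \<ge> norm (a - z) + (s - t) * (inner v (a - z) / norm (a - z)) + inner ee (a - z) / norm (a - z)"
      using azp by (simp add: add_divide_distrib power2_eq_square)
    moreover have "inner v (a - z) / norm (a - z) > M / Ra - \<epsilon>/2"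
      using rho(3) elim(2) z b_def by (simp add: dist_norm)
    then have "(s - t) * (inner v (a - z) / norm (a - z)) \<ge> (s - t) * (M / Ra - \<epsilon>/2)"
      using elim(3) by (intro mult_left_mono) auto
    moreover have "inner ee (a - z) / norm (a - z) \<ge> - (\<eta> * (s - t))"
    proof -
      have "\<bar>inner ee (a - z)\<bar> \<le> norm ee * norm (a - z)" by (rule Cauchy_Schwarz_ineq2)
      then have "\<bar>inner ee (a - z)\<bar> / norm (a - z) \<le> norm ee" using azp by (simp add: divide_le_eq)
      then show ?thesis using een by (smt (verit) abs_div_pos abs_le_iff azp)
    qed
    moreover have "(s - t) * (M / Ra - \<epsilon>/2) - \<eta> * (s - t) = (s - t) * (M / Ra - \<epsilon>)"
      unfolding \<eta>_def by (simp add: field_simps)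
    ultimately have "Ra + (s - t) * (M / Ra - \<epsilon>) \<le> RK K b" using az by linarith
    then show ?case unfolding Ra_def a_def b_def .
  qed
qed



lemma exp_cancel2: "exp (2 * a) * X * exp (- 2 * a) = (X::real)"
proof -
  have "exp (2 * a) * exp (- 2 * a) = 1" by (simp add: mult_exp_exp)
  then show ?thesis by (simp add: algebra_simps)
qed

lemma inner_self_deriv:
  fixes d :: "real \<Rightarrow> 'a::euclidean_space"
  assumes "(d has_vector_derivative d') (at s within S)"
  shows "((\<lambda>x. (norm (d x))\<^sup>2) has_real_derivative (2 * inner (d s) d')) (at s within S)"
proof -
  have h: "(d has_derivative (\<lambda>x. x *\<^sub>R d')) (at s within S)" using assms unfolding has_vector_derivative_def .
  have "((\<lambda>x. inner (d x) (d x)) has_derivative (\<lambda>h. inner (d s) (h *\<^sub>R d') + inner (h *\<^sub>R d') (d s))) (at s within S)"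
    by (rule has_derivative_inner[OF h h])
  then have "((\<lambda>x. inner (d x) (d x)) has_derivative (\<lambda>h. (2 * inner (d s) d') * h)) (at s within S)"
    by (rule has_derivative_eq_rhs) (auto simp: inner_commute fun_eq_iff algebra_simps)
  then show ?thesis unfolding has_field_derivative_def by (simp add: power2_norm_eq_inner)
qed

lemma shift_vderiv:
  fixes z :: "real \<Rightarrow> 'a::euclidean_space"
  assumes "(z has_vector_derivative v) (at (s + \<delta>) within {s + \<delta>..})"
  shows "((\<lambda>x. z (x + \<delta>)) has_vector_derivative v) (at s within {s..})"
proof -
  have 1: "((\<lambda>x. x + \<delta>) has_vector_derivative 1) (at s within {s..})"
    by (auto intro!: derivative_eq_intros)
  have "(\<lambda>x::real. x + \<delta>) ` {s..} = {s + \<delta>..}"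
  proof safe
    fix y assume "s + \<delta> \<le> y" then show "y \<in> (\<lambda>x. x + \<delta>) ` {s..}"
      by (intro image_eqI[of _ _ "y - \<delta>"]) auto
  qed auto
  then have "(z has_vector_derivative v) (at ((\<lambda>x. x + \<delta>) s) within (\<lambda>x. x + \<delta>) ` {s..})"
    using assms by simp
  from vector_diff_chain_within[OF 1 this] show ?thesis by (simp add: o_def)
qed

locale sflow =
  fixes K :: "'a::euclidean_space set" and z :: "real \<Rightarrow> 'a" and \<sigma>0 :: real
  assumes Kc: "closed K" and Kne: "K \<noteq> {}"
    and zK: "\<And>\<sigma>. \<sigma> \<ge> \<sigma>0 \<Longrightarrow> z \<sigma> \<notin> K"
    and zc: "continuous_on {\<sigma>0..} z"
    and zd: "\<And>\<sigma>. \<sigma> \<ge> \<sigma>0 \<Longrightarrow>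
       (z has_vector_derivative (z \<sigma> - mcenter (ThetaK K (z \<sigma>)))) (at \<sigma> within {\<sigma>..})"
begin

definition U where "U \<sigma> = z \<sigma> - mcenter (ThetaK K (z \<sigma>))"

lemma U_mono: "inner (U p - U q) (z p - z q) \<le> (norm (z p - z q))\<^sup>2"
proof -
  have "inner (U p - U q) (z p - z q) = (norm (z p - z q))\<^sup>2
      - inner (mcenter (ThetaK K (z p)) - mcenter (ThetaK K (z q))) (z p - z q)"
    unfolding U_def by (simp add: inner_diff_left power2_norm_eq_inner algebra_simps)
  then show ?thesis using theta_monotone[OF Kc Kne, of "z p" "z q"] by linarith
qed

lemma D_decay:
  assumes \<delta>: "\<delta> > 0" and s1: "\<sigma>0 \<le> \<sigma>1" "\<sigma>1 \<le> \<sigma>"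
  shows "exp (- 2 * \<sigma>) * (norm (z (\<sigma> + \<delta>) - z \<sigma>))\<^sup>2 \<le> exp (- 2 * \<sigma>1) * (norm (z (\<sigma>1 + \<delta>) - z \<sigma>1))\<^sup>2"
proof -
  define f where "f s = - (exp (- 2 * s) * (norm (z (s + \<delta>) - z s))\<^sup>2)" for s
  have cz: "continuous_on {\<sigma>1..\<sigma>} z" using continuous_on_subset[OF zc] s1 by auto
  have cz2: "continuous_on {\<sigma>1..\<sigma>} (\<lambda>s. z (s + \<delta>))"
  proof -
    have "continuous_on {\<sigma>1..\<sigma>} (\<lambda>s. s + \<delta>)" by (intro continuous_intros)
    moreover have "(\<lambda>s. s + \<delta>) ` {\<sigma>1..\<sigma>} \<subseteq> {\<sigma>0..}" using s1 \<delta> by auto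
    ultimately show ?thesis using continuous_on_compose2[OF zc] by blast
  qed
  have fc: "continuous_on {\<sigma>1..\<sigma>} f" unfolding f_def by (intro continuous_intros cz cz2)
  have "f \<sigma>1 \<le> f \<sigma>"
  proof (rule cmp[OF s1(2) fc])
    fix s assume s: "\<sigma>1 \<le> s" "s < \<sigma>"
    then have s0: "s \<ge> \<sigma>0" using s1 by simp
    have d1: "((\<lambda>x. z (x + \<delta>)) has_vector_derivative U (s + \<delta>)) (at s within {s..})"
      using shift_vderiv[OF zd[of "s + \<delta>"]] s0 \<delta> U_def by simp
    have d2: "(z has_vector_derivative U s) (at s within {s..})" using zd[OF s0] U_def by simp
    have dd: "((\<lambda>x. z (x + \<delta>) - z x) has_vector_derivative (U (s + \<delta>) - U s)) (at s within {s..})"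
      using has_vector_derivative_diff[OF d1 d2] .
    have dD: "((\<lambda>x. (norm (z (x + \<delta>) - z x))\<^sup>2) has_real_derivative
        (2 * inner (z (s + \<delta>) - z s) (U (s + \<delta>) - U s))) (at s within {s..})"
      using inner_self_deriv[OF dd] .
    have de: "((\<lambda>x. exp (- 2 * x)) has_real_derivative (exp (- 2 * s) * (- 2))) (at s within {s..})"
      by (auto intro!: derivative_eq_intros)
    have "(f has_real_derivative - (exp (- 2 * s) * (- 2) * (norm (z (s + \<delta>) - z s))\<^sup>2
        + (2 * inner (z (s + \<delta>) - z s) (U (s + \<delta>) - U s)) * exp (- 2 * s))) (at s within {s..})"
      unfolding f_def by (intro DERIV_minus DERIV_mult de dD)
    then have "dini_lb f s (- (exp (- 2 * s) * (- 2) * (norm (z (s + \<delta>) - z s))\<^sup>2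
        + (2 * inner (z (s + \<delta>) - z s) (U (s + \<delta>) - U s)) * exp (- 2 * s)))"
      by (rule dini_deriv)
    moreover have "0 \<le> - (exp (- 2 * s) * (- 2) * (norm (z (s + \<delta>) - z s))\<^sup>2
        + (2 * inner (z (s + \<delta>) - z s) (U (s + \<delta>) - U s)) * exp (- 2 * s))"
    proof -
      have "inner (z (s + \<delta>) - z s) (U (s + \<delta>) - U s) \<le> (norm (z (s + \<delta>) - z s))\<^sup>2"
        using U_mono[of "s + \<delta>" s] by (simp add: inner_commute)
      then have "exp (- 2 * s) * inner (z (s + \<delta>) - z s) (U (s + \<delta>) - U s)
          \<le> exp (- 2 * s) * (norm (z (s + \<delta>) - z s))\<^sup>2" by (intro mult_left_mono) auto
      then show ?thesis by (simp add: algebra_simps)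
    qed
    ultimately show "dini_lb f s 0" by (rule dini_mono)
  qed
  then show ?thesis unfolding f_def by simp
qed

lemma slope_growth:
  assumes s1: "\<sigma>0 \<le> \<sigma>1" "\<sigma>1 \<le> \<sigma>"
  shows "norm (U \<sigma>) \<le> exp (\<sigma> - \<sigma>1) * norm (U \<sigma>1)"
proof (rule field_le_epsilon)
  fix \<eta> :: real assume eta: "\<eta> > 0"
  define \<eta>' where "\<eta>' = \<eta> / (exp (\<sigma> - \<sigma>1) + 1)"
  have eta': "\<eta>' > 0" using eta \<eta>'_def by (simp add: add_pos_pos)
  have d1: "(z has_vector_derivative U \<sigma>) (at \<sigma> within {\<sigma>..})" using zd[of \<sigma>] s1 U_def by simp
  have d2: "(z has_vector_derivative U \<sigma>1) (at \<sigma>1 within {\<sigma>1..})" using zd[of \<sigma>1] s1 U_def by simp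
  have e1: "eventually (\<lambda>\<delta>. norm (z (\<delta> + \<sigma>) - z \<sigma> - \<delta> *\<^sub>R U \<sigma>) \<le> \<eta>' * \<delta>) (at_right 0)"
    using vderiv_approx[OF d1 eta'] unfolding eventually_at_right_to_0[of _ \<sigma>] by simp
  have e2: "eventually (\<lambda>\<delta>. norm (z (\<delta> + \<sigma>1) - z \<sigma>1 - \<delta> *\<^sub>R U \<sigma>1) \<le> \<eta>' * \<delta>) (at_right 0)"
    using vderiv_approx[OF d2 eta'] unfolding eventually_at_right_to_0[of _ \<sigma>1] by simp
  have e3: "eventually (\<lambda>\<delta>. (0::real) < \<delta>) (at_right 0)" by (rule eventually_at_right_less)
  have "eventually (\<lambda>\<delta>. norm (z (\<delta> + \<sigma>) - z \<sigma> - \<delta> *\<^sub>R U \<sigma>) \<le> \<eta>' * \<delta> \<and>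
      norm (z (\<delta> + \<sigma>1) - z \<sigma>1 - \<delta> *\<^sub>R U \<sigma>1) \<le> \<eta>' * \<delta> \<and> 0 < \<delta>) (at_right (0::real))"
    using e1 e2 e3 by (intro eventually_conj)
  then obtain bb where bb: "bb > 0" "\<forall>y>0. y < bb \<longrightarrow> norm (z (y + \<sigma>) - z \<sigma> - y *\<^sub>R U \<sigma>) \<le> \<eta>' * y \<and>
      norm (z (y + \<sigma>1) - z \<sigma>1 - y *\<^sub>R U \<sigma>1) \<le> \<eta>' * y \<and> 0 < y"
    unfolding eventually_at_right_field by auto
  obtain \<delta> where \<delta>: "norm (z (\<delta> + \<sigma>) - z \<sigma> - \<delta> *\<^sub>R U \<sigma>) \<le> \<eta>' * \<delta>"
      "norm (z (\<delta> + \<sigma>1) - z \<sigma>1 - \<delta> *\<^sub>R U \<sigma>1) \<le> \<eta>' * \<delta>" "0 < \<delta>"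
  proof -
    have h: "bb/2 > 0" "bb/2 < bb" using bb(1) by auto
    then show thesis using bb(2) that by blast
  qed
  have A: "\<delta> * norm (U \<sigma>) - \<eta>' * \<delta> \<le> norm (z (\<sigma> + \<delta>) - z \<sigma>)"
  proof -
    have "norm (\<delta> *\<^sub>R U \<sigma>) \<le> norm (z (\<delta> + \<sigma>) - z \<sigma>) + norm (z (\<delta> + \<sigma>) - z \<sigma> - \<delta> *\<^sub>R U \<sigma>)"
      using norm_triangle_sub[of "\<delta> *\<^sub>R U \<sigma>" "z (\<delta> + \<sigma>) - z \<sigma>"] by (simp add: norm_minus_commute)
    then show ?thesis using \<delta>(1,3) by (simp add: add.commute)
  qed
  have B: "norm (z (\<sigma>1 + \<delta>) - z \<sigma>1) \<le> \<delta> * norm (U \<sigma>1) + \<eta>' * \<delta>"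
  proof -
    have "norm (z (\<delta> + \<sigma>1) - z \<sigma>1) \<le> norm (\<delta> *\<^sub>R U \<sigma>1) + norm (z (\<delta> + \<sigma>1) - z \<sigma>1 - \<delta> *\<^sub>R U \<sigma>1)"
      by (rule norm_triangle_sub)
    then show ?thesis using \<delta>(2,3) by (simp add: add.commute)
  qed
  have C: "norm (z (\<sigma> + \<delta>) - z \<sigma>) \<le> exp (\<sigma> - \<sigma>1) * norm (z (\<sigma>1 + \<delta>) - z \<sigma>1)"
  proof -
    have "exp (- 2 * \<sigma>) * (norm (z (\<sigma> + \<delta>) - z \<sigma>))\<^sup>2 \<le> exp (- 2 * \<sigma>1) * (norm (z (\<sigma>1 + \<delta>) - z \<sigma>1))\<^sup>2"
      by (rule D_decay[OF \<delta>(3) s1])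
    then have "(norm (z (\<sigma> + \<delta>) - z \<sigma>))\<^sup>2 \<le> exp (2 * \<sigma>) * exp (- 2 * \<sigma>1) * (norm (z (\<sigma>1 + \<delta>) - z \<sigma>1))\<^sup>2"
      by (simp add: exp_minus field_simps)
    also have "exp (2 * \<sigma>) * exp (- 2 * \<sigma>1) = (exp (\<sigma> - \<sigma>1))\<^sup>2"
      by (simp add: exp_add[symmetric] power2_eq_square)
    finally have "(norm (z (\<sigma> + \<delta>) - z \<sigma>))\<^sup>2 \<le> (exp (\<sigma> - \<sigma>1) * norm (z (\<sigma>1 + \<delta>) - z \<sigma>1))\<^sup>2"
      by (simp add: power_mult_distrib)
    then show ?thesis by (rule power2_le_imp_le) simp
  qed
  have "\<delta> * norm (U \<sigma>) - \<eta>' * \<delta> \<le> exp (\<sigma> - \<sigma>1) * (\<delta> * norm (U \<sigma>1) + \<eta>' * \<delta>)"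
    using A B C by (meson exp_ge_zero mult_left_mono order_trans)
  then have "\<delta> * (norm (U \<sigma>) - exp (\<sigma> - \<sigma>1) * norm (U \<sigma>1)) \<le> \<delta> * (\<eta>' * (exp (\<sigma> - \<sigma>1) + 1))"
    by (simp add: algebra_simps)
  then have "norm (U \<sigma>) - exp (\<sigma> - \<sigma>1) * norm (U \<sigma>1) \<le> \<eta>' * (exp (\<sigma> - \<sigma>1) + 1)"
    using \<delta>(3) by (simp add: mult_le_cancel_left_pos)
  also have "\<eta>' * (exp (\<sigma> - \<sigma>1) + 1) = \<eta>"
  proof -
    have "exp (\<sigma> - \<sigma>1) + 1 > 0" by (simp add: add_pos_pos)
    then show ?thesis using \<eta>'_def by simp
  qed
  finally show "norm (U \<sigma>) \<le> exp (\<sigma> - \<sigma>1) * norm (U \<sigma>1) + \<eta>" by simp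
qed

lemma F_mono:
  assumes s1: "\<sigma>0 \<le> \<sigma>1" "\<sigma>1 \<le> \<sigma>2"
  shows "FK K (z \<sigma>1) \<le> FK K (z \<sigma>2)"
proof -
  define G2 where "G2 = (norm (U \<sigma>2))\<^sup>2"
  define g where "g s = (RK K (z s))\<^sup>2 + (- G2 * exp (- 2 * (\<sigma>2 - s)))" for s
  have cz: "continuous_on {\<sigma>1..\<sigma>2} z" using continuous_on_subset[OF zc] s1 by auto
  have gc: "continuous_on {\<sigma>1..\<sigma>2} g" unfolding g_def
    by (intro continuous_intros continuous_on_compose2[OF RK_cont cz]) auto
  have "g \<sigma>1 \<le> g \<sigma>2"
  proof (rule cmp[OF s1(2) gc])
    fix s assume s: "\<sigma>1 \<le> s" "s < \<sigma>2"
    then have s0: "s \<ge> \<sigma>0" using s1 by simp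
    have d: "(z has_vector_derivative U s) (at s within {s..})" using zd[OF s0] U_def by simp
    have M: "\<forall>w\<in>ThetaK K (z s). inner (U s) (z s - w) \<ge> (norm (U s))\<^sup>2"
      using theta_inner[OF Kc Kne] U_def by simp
    have r2: "dini_lb (\<lambda>x. (RK K (z x))\<^sup>2) s (2 * (norm (U s))\<^sup>2)"
      by (rule dini_R2[OF Kc Kne zK[OF s0] d M])
    have de: "((\<lambda>x. - G2 * exp (- 2 * (\<sigma>2 - x))) has_real_derivative (- G2 * (exp (- 2 * (\<sigma>2 - s)) * 2))) (at s within {s..})"
      by (auto intro!: derivative_eq_intros)
    have r3: "dini_lb (\<lambda>x. - G2 * exp (- 2 * (\<sigma>2 - x))) s (- G2 * (exp (- 2 * (\<sigma>2 - s)) * 2))"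
      by (rule dini_deriv[OF de])
    have sum: "dini_lb g s (2 * (norm (U s))\<^sup>2 + (- G2 * (exp (- 2 * (\<sigma>2 - s)) * 2)))"
      unfolding g_def by (rule dini_add[OF r2 r3])
    have "G2 * exp (- 2 * (\<sigma>2 - s)) \<le> (norm (U s))\<^sup>2"
    proof -
      have "norm (U \<sigma>2) \<le> exp (\<sigma>2 - s) * norm (U s)" using slope_growth[of s \<sigma>2] s0 s by simp
      then have "G2 \<le> (exp (\<sigma>2 - s) * norm (U s))\<^sup>2" unfolding G2_def by (rule power_mono) simp
      also have "\<dots> = exp (2 * (\<sigma>2 - s)) * (norm (U s))\<^sup>2"
        by (simp add: power_mult_distrib exp_double[symmetric] power2_eq_square mult_exp_exp)
      finally have "G2 * exp (- 2 * (\<sigma>2 - s)) \<le> exp (2 * (\<sigma>2 - s)) * (norm (U s))\<^sup>2 * exp (- 2 * (\<sigma>2 - s))"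
        by (intro mult_right_mono) auto
      also have "\<dots> = (norm (U s))\<^sup>2" by (rule exp_cancel2)
      finally show ?thesis .
    qed
    then show "dini_lb g s 0" using sum by (intro dini_mono[OF sum]) (simp add: algebra_simps)
  qed
  then have 1: "(RK K (z \<sigma>1))\<^sup>2 - G2 * exp (- 2 * (\<sigma>2 - \<sigma>1)) \<le> (RK K (z \<sigma>2))\<^sup>2 - G2"
    unfolding g_def by simp
  have "norm (U \<sigma>2) \<le> exp (\<sigma>2 - \<sigma>1) * norm (U \<sigma>1)" using slope_growth s1 by simp
  then have "G2 \<le> (exp (\<sigma>2 - \<sigma>1) * norm (U \<sigma>1))\<^sup>2" unfolding G2_def by (rule power_mono) simp
  also have "\<dots> = exp (2 * (\<sigma>2 - \<sigma>1)) * (norm (U \<sigma>1))\<^sup>2"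
    by (simp add: power_mult_distrib exp_double[symmetric] power2_eq_square mult_exp_exp)
  finally have "G2 * exp (- 2 * (\<sigma>2 - \<sigma>1)) \<le> exp (2 * (\<sigma>2 - \<sigma>1)) * (norm (U \<sigma>1))\<^sup>2 * exp (- 2 * (\<sigma>2 - \<sigma>1))"
    by (intro mult_right_mono) auto
  also have "\<dots> = (norm (U \<sigma>1))\<^sup>2" by (rule exp_cancel2)
  finally have 2: "G2 * exp (- 2 * (\<sigma>2 - \<sigma>1)) \<le> (norm (U \<sigma>1))\<^sup>2" .
  have e1: "(FK K (z \<sigma>1))\<^sup>2 = (RK K (z \<sigma>1))\<^sup>2 - (norm (U \<sigma>1))\<^sup>2" using FK_eq[OF Kc Kne, of "z \<sigma>1"] U_def by simp
  have e2: "(FK K (z \<sigma>2))\<^sup>2 = (RK K (z \<sigma>2))\<^sup>2 - G2" using FK_eq[OF Kc Kne, of "z \<sigma>2"] U_def G2_def by simp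
  have "(FK K (z \<sigma>1))\<^sup>2 \<le> (FK K (z \<sigma>2))\<^sup>2" using 1 2 e1 e2 by linarith
  then show ?thesis using FK_nonneg[OF Kc Kne] by (meson power2_le_imp_le)
qed

end



lemma infdist_ge_all:
  assumes "A \<noteq> {}" "\<And>w. w \<in> A \<Longrightarrow> d \<le> dist x w" shows "d \<le> infdist x A"
  unfolding infdist_def using assms by (auto intro!: cINF_greatest)

lemma offset_F:
  fixes K :: "'a::euclidean_space set"
  assumes Kc: "closed K" and Kne: "K \<noteq> {}" and al: "\<alpha> \<ge> 0" and pR: "RK K p > \<alpha>"
  shows "FK (offset K \<alpha>) p \<ge> FK K p * ((RK K p - \<alpha>) / RK K p)"
proof -
  define R where "R = RK K p"
  define s where "s = (R - \<alpha>) / R"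
  have Rpos: "R > 0" using pR al R_def by simp
  have s01: "s > 0" "s \<le> 1" using pR al Rpos R_def s_def by auto
  define Off where "Off = offset K \<alpha>"
  define w where "w z = p + s *\<^sub>R (z - p)" for z
  have wO: "w z \<in> Off" "dist p (w z) = R - \<alpha>" if z: "z \<in> ThetaK K p" for z
  proof -
    have dz: "norm (p - z) = R" using theta_dist[OF z] R_def by (simp add: dist_norm)
    have "w z - z = (1 - s) *\<^sub>R (p - z)" unfolding w_def by (simp add: algebra_simps)
    then have "dist (w z) z = (1 - s) * R" using dz s01 by (simp add: dist_norm)
    also have "(1 - s) * R = \<alpha>" using Rpos s_def by (simp add: field_simps)
    finally have "dist (w z) z = \<alpha>" .
    moreover have "z \<in> K" using z theta_sub(1) by blast
    ultimately have "infdist (w z) K \<le> \<alpha>" by (metis infdist_le)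
    then show "w z \<in> Off" unfolding Off_def offset_def by simp
    have "p - w z = s *\<^sub>R (p - z)" unfolding w_def by (simp add: algebra_simps)
    then have "dist p (w z) = s * R" using dz s01 by (simp add: dist_norm)
    then show "dist p (w z) = R - \<alpha>" using Rpos s_def by simp
  qed
  obtain z0 where z0: "z0 \<in> ThetaK K p" using theta_ne[OF Kc Kne] by blast
  have One: "Off \<noteq> {}" using wO(1)[OF z0] by blast
  have RO: "RK Off p = R - \<alpha>"
  proof (rule antisym)
    show "RK Off p \<le> R - \<alpha>" unfolding RK_def using infdist_le[OF wO(1)[OF z0], of p] wO(2)[OF z0] by simp
    show "R - \<alpha> \<le> RK Off p" unfolding RK_def
    proof (rule infdist_ge_all[OF One])
      fix v assume "v \<in> Off"
      then have "infdist v K \<le> \<alpha>" unfolding Off_def offset_def by simp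
      moreover have "R \<le> infdist v K + dist p v" using RK_lip[of K p v] R_def by (simp add: RK_def)
      ultimately show "R - \<alpha> \<le> dist p v" by simp
    qed
  qed
  have wT: "w z \<in> ThetaK Off p" if "z \<in> ThetaK K p" for z
    using wO[OF that] RO unfolding ThetaK_def by simp
  have TOne: "ThetaK Off p \<noteq> {}" using wT[OF z0] by blast
  have TOb: "bounded (ThetaK Off p)"
    using theta_sub(2)[of Off p] bounded_subset[OF bounded_sphere] by blast
  have "FK K p * s \<le> r" if r: "ThetaK Off p \<subseteq> cball c r" for c r
  proof -
    define c' where "c' = p + (1 / s) *\<^sub>R (c - p)"
    have "ThetaK K p \<subseteq> cball c' (r / s)"
    proof
      fix z assume z: "z \<in> ThetaK K p"
      have "dist c (w z) \<le> r" using r wT[OF z] by auto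
      moreover have "w z - c = s *\<^sub>R (z - c')" unfolding w_def c'_def using s01
        by (simp add: algebra_simps)
      moreover have "dist c (w z) = norm (w z - c)" by (simp add: dist_norm norm_minus_commute)
      ultimately have "s * norm (z - c') \<le> r" using s01 by simp
      then have "norm (z - c') \<le> r / s" using s01 by (simp add: field_simps)
      then show "z \<in> cball c' (r / s)" by (simp add: dist_norm norm_minus_commute)
    qed
    then have "FK K p \<le> r / s" unfolding FK_def
      using mball_props(2)[OF theta_ne[OF Kc Kne] compact_imp_bounded[OF theta_compact[OF Kc]]] by blast
    then show ?thesis using s01 by (simp add: field_simps)
  qed
  moreover have "{r. \<exists>c. ThetaK Off p \<subseteq> cball c r} \<noteq> {}"
    using mball_props(1)[OF TOne TOb] by blast
  ultimately have "FK K p * s \<le> mradius (ThetaK Off p)" unfolding mradius_def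
    by (intro cInf_greatest) auto
  then show ?thesis unfolding FK_def Off_def s_def R_def by simp
qed

lemma RK_le_Rmax:
  fixes K :: "'a::euclidean_space set"
  assumes Kne: "K \<noteq> {}" and Kb: "bounded (- K)" and p: "p \<notin> K"
  shows "RK K p \<le> Rmax K"
proof -
  obtain k0 where k0: "k0 \<in> K" using Kne by blast
  obtain B where B: "\<forall>q\<in>- K. norm q \<le> B" using Kb bounded_iff by blast
  have "RK K q \<le> B + norm k0" if "q \<in> - K" for q
  proof -
    have "RK K q \<le> dist q k0" by (rule RK_le[OF k0])
    also have "\<dots> \<le> norm q + norm k0" by (simp add: dist_norm norm_triangle_ineq4)
    finally have "RK K q \<le> norm q + norm k0" .
    moreover have "norm q \<le> B" using B that by blast
    ultimately show ?thesis by linarith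
  qed
  then have "bdd_above (RK K ` (- K))" by (intro bdd_aboveI2[of _ _ "B + norm k0"]) auto
  then show ?thesis unfolding Rmax_def using p by (auto intro: cSup_upper)
qed

lemma chiK_le:
  assumes "RK K p = t" shows "chiK K t \<le> norm (gradK K p)"
proof -
  have ne: "{x. RK K x = t} \<noteq> {}" using assms by blast
  have "Inf ((\<lambda>x. norm (gradK K x)) ` {x. RK K x = t}) \<le> norm (gradK K p)"
    using assms by (intro cInf_lower) (auto intro: bdd_belowI2[of _ 0])
  moreover have "chiK K t = Inf ((\<lambda>x. norm (gradK K x)) ` {x. RK K x = t})"
    unfolding chiK_def by (rule if_not_P[OF ne])
  ultimately show ?thesis by simp
qed

locale tflow =
  fixes K :: "'a::euclidean_space set" and y :: "real \<Rightarrow> 'a"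
  assumes Kc: "closed K" and Kne: "K \<noteq> {}" and Kb: "bounded (- K)"
    and yK: "\<And>t. t \<ge> 0 \<Longrightarrow> y t \<notin> K"
    and yc: "continuous_on {0..} y"
    and yd: "\<And>t. t \<ge> 0 \<Longrightarrow> (y has_vector_derivative gradK K (y t)) (at t within {t..})"
begin

lemma R_dini:
  assumes t: "t \<ge> 0"
  shows "dini_lb (\<lambda>s. RK K (y s)) t ((norm (gradK K (y t)))\<^sup>2)"
proof -
  define u where "u = y t - mcenter (ThetaK K (y t))"
  define R where "R = RK K (y t)"
  have Rpos: "R > 0" using RK_pos[OF Kc Kne yK[OF t]] R_def by simp
  have g: "gradK K (y t) = (1 / R) *\<^sub>R u" unfolding gradK_def u_def R_def ..
  have M: "\<forall>z\<in>ThetaK K (y t). inner (gradK K (y t)) (y t - z) \<ge> (norm u)\<^sup>2 / R"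
  proof
    fix z assume "z \<in> ThetaK K (y t)"
    then have "inner u (y t - z) \<ge> (norm u)\<^sup>2" using theta_inner[OF Kc Kne] u_def by blast
    then show "inner (gradK K (y t)) (y t - z) \<ge> (norm u)\<^sup>2 / R" unfolding g using Rpos
      by (simp add: divide_right_mono)
  qed
  have "dini_lb (\<lambda>s. RK K (y s)) t (((norm u)\<^sup>2 / R) / RK K (y t))"
    by (rule dini_R[OF Kc Kne yK[OF t] yd[OF t] M])
  moreover have "((norm u)\<^sup>2 / R) / RK K (y t) = (norm (gradK K (y t)))\<^sup>2"
    unfolding g R_def[symmetric] using Rpos by (simp add: power_divide power2_eq_square)
  ultimately show ?thesis by simp
qed

lemma Ry_cont: "continuous_on {a..b} (\<lambda>s. RK K (y s))" if "a \<ge> 0" for a b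
proof -
  have "continuous_on {a..b} y" using continuous_on_subset[OF yc] that by auto
  then show ?thesis by (rule continuous_on_compose2[OF RK_cont]) auto
qed

lemma R_mono:
  assumes "0 \<le> t1" "t1 \<le> t2" shows "RK K (y t1) \<le> RK K (y t2)"
proof (rule cmp[OF assms(2) Ry_cont[OF assms(1)]])
  fix t assume "t1 \<le> t" "t < t2"
  then have "t \<ge> 0" using assms by simp
  show "dini_lb (\<lambda>s. RK K (y s)) t 0" by (rule dini_mono[OF R_dini[OF \<open>t \<ge> 0\<close>]]) simp
qed

lemma R_grow:
  assumes T: "T \<ge> 0" and m: "m \<ge> 0" and g: "\<And>t. 0 \<le> t \<Longrightarrow> t < T \<Longrightarrow> norm (gradK K (y t)) \<ge> m"
  shows "RK K (y 0) + m\<^sup>2 * T \<le> RK K (y T)"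
proof -
  define f where "f s = RK K (y s) + (- (m\<^sup>2 * s))" for s
  have fc: "continuous_on {0..T} f" unfolding f_def by (intro continuous_intros Ry_cont) simp
  have "f 0 \<le> f T"
  proof (rule cmp[OF T fc])
    fix t assume t: "0 \<le> t" "t < T"
    have d2: "((\<lambda>s. - (m\<^sup>2 * s)) has_real_derivative (- (m\<^sup>2))) (at t within {t..})"
      by (auto intro!: derivative_eq_intros)
    have "dini_lb f t ((norm (gradK K (y t)))\<^sup>2 + (- (m\<^sup>2)))"
      unfolding f_def by (rule dini_add[OF R_dini[OF t(1)] dini_deriv[OF d2]])
    moreover have "m\<^sup>2 \<le> (norm (gradK K (y t)))\<^sup>2" using g[OF t] m by (simp add: power_mono)
    ultimately show "dini_lb f t 0" using dini_mono by fastforce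
  qed
  then show ?thesis unfolding f_def by simp
qed

end



context tflow begin

definition R0 where "R0 = RK K (y 0)"
definition Rm where "Rm = Rmax K"
definition g where "g t = 1 / RK K (y t)"
definition S where "S t = integral {0..t} g"
definition tau where "tau \<sigma> = (THE t. 0 \<le> t \<and> S t = \<sigma>)"

lemma R0_pos: "R0 > 0" unfolding R0_def using RK_pos[OF Kc Kne yK[of 0]] by simp

lemma R_bounds: assumes "t \<ge> 0" shows "R0 \<le> RK K (y t)" "RK K (y t) \<le> Rm"
  using R_mono[of 0 t] assms RK_le_Rmax[OF Kne Kb yK[OF assms]] unfolding R0_def Rm_def by auto

lemma Rm_pos: "Rm > 0" using R_bounds[of 0] R0_pos by simp

lemma g_cont: "continuous_on {0..b} g" if "b \<ge> 0" for b
proof -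
  have "continuous_on {0..b} (\<lambda>s. RK K (y s))" by (rule Ry_cont) simp
  moreover have "\<forall>s\<in>{0..b}. RK K (y s) \<noteq> 0" using R_bounds(1) R0_pos by (metis atLeastAtMost_iff not_less order_less_le_trans)
  ultimately show ?thesis unfolding g_def by (intro continuous_intros) auto
qed

lemma g_bounds: assumes "t \<ge> 0" shows "1 / Rm \<le> g t" "g t \<le> 1 / R0"
  using R_bounds[OF assms] R0_pos unfolding g_def by (auto intro: divide_left_mono)

lemma S_deriv0: assumes "0 \<le> t" "t \<le> b"
  shows "(S has_real_derivative g t) (at t within {0..b})"
  unfolding S_def has_real_derivative_iff_has_vector_derivative
  using integral_has_vector_derivative[OF g_cont[of b]] assms by auto

lemma S_deriv: assumes "t \<ge> 0" shows "(S has_real_derivative g t) (at t within {t..})"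
proof -
  have "(S has_real_derivative g t) (at t within {0..t+1})"
    using S_deriv0[of t "t+1"] assms by simp
  then have "(S has_real_derivative g t) (at t within {t..t+1})"
    by (rule DERIV_subset) (use assms in auto)
  then show ?thesis using at_within_Icc_at_right[of t "t+1"] at_within_Ici_at_right[of t] by simp
qed

lemma S_cont: assumes "0 \<le> a" shows "continuous_on {a..b} S"
proof -
  have "continuous_on {0..max a b} S"
    unfolding continuous_on_eq_continuous_within
    using S_deriv0 DERIV_continuous by (metis atLeastAtMost_iff)
  then show ?thesis by (rule continuous_on_subset) (use assms in auto)
qed

lemma S0: "S 0 = 0" unfolding S_def by simp

lemma S_bounds: assumes "0 \<le> t1" "t1 \<le> t2"
  shows "(t2 - t1) / Rm \<le> S t2 - S t1" "S t2 - S t1 \<le> (t2 - t1) / R0"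
proof -
  define f where "f t = S t + (- (t / Rm))" for t
  have "f t1 \<le> f t2"
  proof (rule cmp[OF assms(2)])
    show "continuous_on {t1..t2} f" unfolding f_def by (intro continuous_intros S_cont assms(1)) (use Rm_pos in auto)
    fix t assume t: "t1 \<le> t" "t < t2"
    then have t0: "t \<ge> 0" using assms by simp
    have d: "((\<lambda>t. - (t / Rm)) has_real_derivative (- (1 / Rm))) (at t within {t..})"
      using Rm_pos by (auto intro!: derivative_eq_intros)
    have "dini_lb f t (g t + (- (1 / Rm)))" unfolding f_def by (rule dini_add[OF dini_deriv[OF S_deriv[OF t0]] dini_deriv[OF d]])
    moreover have "0 \<le> g t + (- (1 / Rm))" using g_bounds[OF t0] by simp
    ultimately show "dini_lb f t 0" by (rule dini_mono)
  qed
  then show "(t2 - t1) / Rm \<le> S t2 - S t1" unfolding f_def by (simp add: diff_divide_distrib)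
  define h where "h t = t / R0 + (- S t)" for t
  have "h t1 \<le> h t2"
  proof (rule cmp[OF assms(2)])
    show "continuous_on {t1..t2} h" unfolding h_def by (intro continuous_intros S_cont assms(1)) (use R0_pos in auto)
    fix t assume t: "t1 \<le> t" "t < t2"
    then have t0: "t \<ge> 0" using assms by simp
    have d: "((\<lambda>t. t / R0) has_real_derivative (1 / R0)) (at t within {t..})"
      using R0_pos by (auto intro!: derivative_eq_intros)
    have d2: "((\<lambda>t. - S t) has_real_derivative (- g t)) (at t within {t..})"
      by (rule DERIV_minus[OF S_deriv[OF t0]])
    have "dini_lb h t (1 / R0 + (- g t))" unfolding h_def by (rule dini_add[OF dini_deriv[OF d] dini_deriv[OF d2]])
    moreover have "0 \<le> 1 / R0 + (- g t)" using g_bounds[OF t0] by simp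
    ultimately show "dini_lb h t 0" by (rule dini_mono)
  qed
  then show "S t2 - S t1 \<le> (t2 - t1) / R0" unfolding h_def by (simp add: diff_divide_distrib)
qed

lemma S_strict: assumes "0 \<le> t1" "t1 < t2" shows "S t1 < S t2"
proof -
  have "(t2 - t1) / Rm > 0" using assms Rm_pos by simp
  then show ?thesis using S_bounds(1)[of t1 t2] assms by simp
qed

lemma S_nonneg: "t \<ge> 0 \<Longrightarrow> S t \<ge> 0"
proof -
  assume t: "t \<ge> 0"
  have "t / Rm \<ge> 0" using t Rm_pos by simp
  then show ?thesis using S_bounds(1)[of 0 t] S0 t by simp
qed

lemma tau_ex: assumes "\<sigma> \<ge> 0" shows "\<exists>t. 0 \<le> t \<and> S t = \<sigma>"
proof -
  have "\<sigma> \<le> S (\<sigma> * Rm)" using S_bounds(1)[of 0 "\<sigma> * Rm"] S0 Rm_pos assms by simp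
  moreover have "S 0 \<le> \<sigma>" using S0 assms by simp
  moreover have "0 \<le> \<sigma> * Rm" using assms Rm_pos by simp
  ultimately show ?thesis using IVT'[of S 0 \<sigma> "\<sigma> * Rm"] S_cont[of 0 "\<sigma> * Rm"] by auto
qed

lemma S_inj: assumes "0 \<le> t1" "0 \<le> t2" "S t1 = S t2" shows "t1 = t2"
  using S_strict assms by (metis less_irrefl linorder_neqE_linordered_idom)

lemma tau_props: assumes "\<sigma> \<ge> 0" shows "tau \<sigma> \<ge> 0" "S (tau \<sigma>) = \<sigma>"
proof -
  obtain t where t: "0 \<le> t" "S t = \<sigma>" using tau_ex[OF assms] by blast
  have "tau \<sigma> = t" unfolding tau_def using t S_inj by (intro the_equality) auto
  then show "tau \<sigma> \<ge> 0" "S (tau \<sigma>) = \<sigma>" using t by auto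
qed

lemma tau_S: assumes "t \<ge> 0" shows "tau (S t) = t"
  using tau_props[OF S_nonneg[OF assms]] S_inj assms by blast

lemma tau_bounds: assumes "0 \<le> \<sigma>1" "\<sigma>1 \<le> \<sigma>2"
  shows "R0 * (\<sigma>2 - \<sigma>1) \<le> tau \<sigma>2 - tau \<sigma>1" "tau \<sigma>2 - tau \<sigma>1 \<le> Rm * (\<sigma>2 - \<sigma>1)"
proof -
  have s2: "\<sigma>2 \<ge> 0" using assms by simp
  have le: "tau \<sigma>1 \<le> tau \<sigma>2"
  proof (rule ccontr)
    assume "\<not> tau \<sigma>1 \<le> tau \<sigma>2"
    then have "S (tau \<sigma>2) < S (tau \<sigma>1)" using S_strict tau_props(1)[OF s2] by simp
    then show False using tau_props(2)[OF s2] tau_props(2)[OF assms(1)] assms by simp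
  qed
  have e: "S (tau \<sigma>2) - S (tau \<sigma>1) = \<sigma>2 - \<sigma>1" using tau_props(2) s2 assms(1) by simp
  show "R0 * (\<sigma>2 - \<sigma>1) \<le> tau \<sigma>2 - tau \<sigma>1"
    using S_bounds(2)[OF tau_props(1)[OF assms(1)] le] e R0_pos by (simp add: field_simps)
  show "tau \<sigma>2 - tau \<sigma>1 \<le> Rm * (\<sigma>2 - \<sigma>1)"
    using S_bounds(1)[OF tau_props(1)[OF assms(1)] le] e Rm_pos by (simp add: field_simps)
qed

lemma tau_cont: "continuous_on {0..} tau"
  unfolding continuous_on_iff
proof (intro ballI allI impI)
  fix \<sigma> e :: real assume \<sigma>: "\<sigma> \<in> {0..}" and e: "e > 0"
  show "\<exists>d>0. \<forall>x'\<in>{0..}. dist x' \<sigma> < d \<longrightarrow> dist (tau x') (tau \<sigma>) < e"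
  proof (intro exI[of _ "e / Rm"] conjI ballI impI)
    show "e / Rm > 0" using e Rm_pos by simp
    fix x' assume x': "x' \<in> {0..}" "dist x' \<sigma> < e / Rm"
    have "\<bar>tau x' - tau \<sigma>\<bar> \<le> Rm * \<bar>x' - \<sigma>\<bar>"
    proof (cases "x' \<le> \<sigma>")
      case True
      then have "0 \<le> R0 * (\<sigma> - x')" using R0_pos by simp
      then show ?thesis using tau_bounds[of x' \<sigma>] x' True by (simp add: abs_le_iff)
    next
      case False
      then have "0 \<le> R0 * (x' - \<sigma>)" using R0_pos by simp
      then show ?thesis using tau_bounds[of \<sigma> x'] \<sigma> False by (simp add: abs_le_iff)
    qed
    also have "\<dots> < Rm * (e / Rm)" using x'(2) Rm_pos by (intro mult_strict_left_mono) (auto simp: dist_real_def)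
    also have "\<dots> = e" using Rm_pos by simp
    finally show "dist (tau x') (tau \<sigma>) < e" by (simp add: dist_real_def)
  qed
qed

lemma tau_deriv: assumes \<sigma>: "\<sigma> \<ge> 0"
  shows "(tau has_real_derivative RK K (y (tau \<sigma>))) (at \<sigma> within {\<sigma>..})"
proof -
  define t where "t = tau \<sigma>"
  have t0: "t \<ge> 0" using tau_props(1)[OF \<sigma>] t_def by simp
  have gpos: "g t > 0" using R_bounds(1)[OF t0] R0_pos unfolding g_def by simp
  have q: "((\<lambda>u. (S u - S t) / (u - t)) \<longlongrightarrow> g t) (at_right t)"
    using S_deriv[OF t0] unfolding has_field_derivative_iff at_within_Ici_at_right .
  have tc: "(tau \<longlongrightarrow> t) (at_right \<sigma>)"
  proof -
    have "continuous (at \<sigma> within {0..}) tau" using tau_cont \<sigma> continuous_on_eq_continuous_within by blast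
    then have "(tau \<longlongrightarrow> t) (at \<sigma> within {0..})" unfolding continuous_within t_def .
    moreover have "at_right \<sigma> \<le> at \<sigma> within {0..}"
      unfolding at_within_Ici_at_right[symmetric] using \<sigma> by (intro at_le) auto
    ultimately show ?thesis by (rule tendsto_mono[rotated])
  qed
  have "eventually (\<lambda>x. t < tau x) (at_right \<sigma>)"
  proof -
    have "eventually (\<lambda>x. \<sigma> < x) (at_right \<sigma>)" by (rule eventually_at_right_less)
    then show ?thesis
    proof (rule eventually_mono)
      fix x assume "\<sigma> < x"
      then have "R0 * (x - \<sigma>) \<le> tau x - tau \<sigma>" using tau_bounds[of \<sigma> x] \<sigma> by simp
      moreover have "R0 * (x - \<sigma>) > 0" using \<open>\<sigma> < x\<close> R0_pos by simp
      ultimately show "t < tau x" using t_def by simp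
    qed
  qed
  then have fl: "filterlim tau (at_right t) (at_right \<sigma>)" using tc by (intro tendsto_imp_filterlim_at_right)
  have comp: "((\<lambda>x. (S (tau x) - S t) / (tau x - t)) \<longlongrightarrow> g t) (at_right \<sigma>)"
    using filterlim_compose[OF q fl] by (simp add: o_def)
  have ev: "eventually (\<lambda>x. inverse ((S (tau x) - S t) / (tau x - t)) = (tau x - tau \<sigma>) / (x - \<sigma>)) (at_right \<sigma>)"
  proof -
    have "eventually (\<lambda>x. \<sigma> < x) (at_right \<sigma>)" by (rule eventually_at_right_less)
    then show ?thesis
    proof (rule eventually_mono)
      fix x assume "\<sigma> < x"
      then have "S (tau x) = x" using tau_props(2) \<sigma> by simp
      moreover have "S t = \<sigma>" using tau_props(2)[OF \<sigma>] t_def by simp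
      ultimately show "inverse ((S (tau x) - S t) / (tau x - t)) = (tau x - tau \<sigma>) / (x - \<sigma>)"
        using t_def by simp
    qed
  qed
  have "((\<lambda>x. inverse ((S (tau x) - S t) / (tau x - t))) \<longlongrightarrow> inverse (g t)) (at_right \<sigma>)"
    using tendsto_inverse[OF comp] gpos by simp
  then have "((\<lambda>x. (tau x - tau \<sigma>) / (x - \<sigma>)) \<longlongrightarrow> inverse (g t)) (at_right \<sigma>)"
    using ev by (rule Lim_transform_eventually)
  moreover have "inverse (g t) = RK K (y (tau \<sigma>))" unfolding g_def t_def by simp
  ultimately show ?thesis unfolding has_field_derivative_iff at_within_Ici_at_right by simp
qed

definition z where "z \<sigma> = y (tau \<sigma>)"

lemma z_deriv: assumes \<sigma>: "\<sigma> \<ge> 0"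
  shows "(z has_vector_derivative (z \<sigma> - mcenter (ThetaK K (z \<sigma>)))) (at \<sigma> within {\<sigma>..})"
proof -
  define t where "t = tau \<sigma>"
  have t0: "t \<ge> 0" using tau_props(1)[OF \<sigma>] t_def by simp
  have Rpos: "RK K (y t) > 0" using R_bounds(1)[OF t0] R0_pos by simp
  have d1: "(tau has_vector_derivative RK K (y t)) (at \<sigma> within {\<sigma>..})"
    using tau_deriv[OF \<sigma>] t_def by (simp add: has_real_derivative_iff_has_vector_derivative)
  have sub: "tau ` {\<sigma>..} \<subseteq> {tau \<sigma>..}"
  proof
    fix v assume "v \<in> tau ` {\<sigma>..}"
    then obtain x where "x \<ge> \<sigma>" "v = tau x" by auto
    moreover have "0 \<le> R0 * (x - \<sigma>)" using R0_pos \<open>x \<ge> \<sigma>\<close> by simp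
    ultimately show "v \<in> {tau \<sigma>..}" using tau_bounds[of \<sigma> x] \<sigma> by simp
  qed
  have d2: "(y has_vector_derivative gradK K (y t)) (at (tau \<sigma>) within tau ` {\<sigma>..})"
    using has_vector_derivative_within_subset[OF yd[OF t0] sub[folded t_def]] t_def by simp
  have "((y \<circ> tau) has_vector_derivative (RK K (y t) *\<^sub>R gradK K (y t))) (at \<sigma> within {\<sigma>..})"
    by (rule vector_diff_chain_within[OF d1 d2])
  moreover have "RK K (y t) *\<^sub>R gradK K (y t) = z \<sigma> - mcenter (ThetaK K (z \<sigma>))"
    unfolding gradK_def z_def t_def[symmetric] using Rpos by simp
  ultimately show ?thesis unfolding z_def[abs_def] by (simp add: o_def)
qed

lemma F_mono_y: assumes "0 \<le> t1" "t1 \<le> t2" shows "FK K (y t1) \<le> FK K (y t2)"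
proof -
  interpret sf: sflow K z 0
  proof
    show "closed K" by (rule Kc)
    show "K \<noteq> {}" by (rule Kne)
    show "z \<sigma> \<notin> K" if "\<sigma> \<ge> 0" for \<sigma> unfolding z_def using yK tau_props(1) that by blast
    show "continuous_on {0..} z" unfolding z_def[abs_def]
      using continuous_on_compose2[OF yc tau_cont] tau_props(1) by auto
    show "(z has_vector_derivative (z \<sigma> - mcenter (ThetaK K (z \<sigma>)))) (at \<sigma> within {\<sigma>..})"
      if "\<sigma> \<ge> 0" for \<sigma> using z_deriv that by blast
  qed
  have "(t2 - t1) / Rm \<ge> 0" using assms Rm_pos by simp
  then have "0 \<le> S t1" "S t1 \<le> S t2" using S_nonneg[OF assms(1)] S_bounds(1)[OF assms] by auto
  then have "FK K (z (S t1)) \<le> FK K (z (S t2))" by (rule sf.F_mono)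
  then show ?thesis unfolding z_def using tau_S assms by simp
qed

end



theorem lemma9p6:
  fixes K :: "'a::euclidean_space set" and \<Phi> :: "real \<Rightarrow> 'a \<Rightarrow> 'a"
    and \<alpha> \<alpha>' lam \<mu> :: real
  assumes "closed K" and "bounded (- K)"
    and "is_flowK K \<Phi>"
    and "\<alpha> \<ge> 0" and "lam > 0" and "0 < \<mu>" and "\<mu> \<le> 1"
    and "0 < \<alpha>'" and "\<alpha>' \<le> \<alpha>"
    and "r_mu K \<mu> \<alpha>' > ereal (\<alpha> + lam)"
    and "mu_tilde K \<mu> lam \<alpha> \<alpha>' > 0"
  shows "\<Phi> (Rmax K / (mu_tilde K \<mu> lam \<alpha> \<alpha>')\<^sup>2) ` (- offset K \<alpha>') \<subseteq> axis K lam \<alpha>"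
proof
  note Kc = assms(1) and Kb = assms(2) and fl = assms(3) and al = assms(4) and lam = assms(5)
    and mu = assms(6,7) and al' = assms(8,9) and rmu = assms(10) and mt = assms(11)
  have Kne: "K \<noteq> {}"
  proof
    assume "K = {}"
    then have "bounded (UNIV :: 'a set)" using Kb by simp
    then show False using not_bounded_UNIV by blast
  qed
  define mut where "mut = mu_tilde K \<mu> lam \<alpha> \<alpha>'"
  define T where "T = Rmax K / mut\<^sup>2"
  fix q assume "q \<in> \<Phi> (Rmax K / (mu_tilde K \<mu> lam \<alpha> \<alpha>')\<^sup>2) ` (- offset K \<alpha>')"
  then obtain x where x: "x \<in> - offset K \<alpha>'" and q: "q = \<Phi> T x" unfolding T_def mut_def by blast
  have xinf: "infdist x K > \<alpha>'" using x unfolding offset_def by simp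
  have xK: "x \<notin> K"
  proof
    assume "x \<in> K" then have "infdist x K = 0" by simp
    then show False using xinf al' by simp
  qed
  define y where "y t = \<Phi> t x" for t
  have flow: "continuous_on ({0..} \<times> (- K)) (\<lambda>(t, x). \<Phi> t x)"
    "\<forall>t\<ge>0. \<forall>x\<in>-K. \<Phi> t x \<in> - K"
    "\<forall>x\<in>-K. \<Phi> 0 x = x"
    "\<forall>t\<ge>0. \<forall>x\<in>-K. ((\<lambda>s. \<Phi> s x) has_vector_derivative gradK K (\<Phi> t x)) (at t within {t..})"
    using fl unfolding is_flowK_def by auto
  interpret tf: tflow K y
  proof
    show "closed K" by (rule Kc)
    show "K \<noteq> {}" by (rule Kne)
    show "bounded (- K)" by (rule Kb)
    show "y t \<notin> K" if "t \<ge> 0" for t using flow(2) that xK unfolding y_def by auto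
    have "continuous_on {0..} ((\<lambda>(t, x). \<Phi> t x) \<circ> (\<lambda>t. (t, x)))"
      by (rule continuous_on_compose[OF _ continuous_on_subset[OF flow(1)]])
        (auto intro!: continuous_intros simp: xK)
    then show "continuous_on {0..} y" unfolding y_def[abs_def] by (simp add: o_def)
    show "(y has_vector_derivative gradK K (y t)) (at t within {t..})" if "t \<ge> 0" for t
      using flow(4) that xK unfolding y_def[abs_def] by auto
  qed
  have y0: "y 0 = x" using flow(3) xK unfolding y_def by auto
  have R0x: "RK K (y 0) = infdist x K" using y0 RK_def by simp
  have mutpos: "mut > 0" using mt mut_def by simp
  have Rmpos: "Rmax K > 0" using tf.Rm_pos tf.Rm_def by simp
  have T0: "T \<ge> 0" using Rmpos mutpos T_def by simp
  have mutT: "mut\<^sup>2 * T = Rmax K" using mutpos T_def by simp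
  obtain t where t: "0 \<le> t" "t < T" "norm (gradK K (y t)) < mut"
  proof (rule ccontr)
    assume "\<not> thesis"
    then have "\<And>t. 0 \<le> t \<Longrightarrow> t < T \<Longrightarrow> norm (gradK K (y t)) \<ge> mut" using that by (meson not_le)
    then have "RK K (y 0) + mut\<^sup>2 * T \<le> RK K (y T)" using tf.R_grow[OF T0] mutpos by simp
    moreover have "RK K (y T) \<le> Rmax K" using tf.R_bounds(2)[OF T0] tf.Rm_def by simp
    moreover have "RK K (y 0) > 0" using R0x xinf al' by simp
    ultimately show False using mutT by simp
  qed
  define Rt where "Rt = RK K (y t)"
  define ng where "ng = norm (gradK K (y t))"
  have Rt_ge: "Rt \<ge> infdist x K" using tf.R_mono[of 0 t] t R0x Rt_def by simp
  have Rtpos: "Rt > 0" using Rt_ge xinf al' by simp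
  have Rt_le: "Rt \<le> Rmax K" using tf.R_bounds(2)[OF t(1)] tf.Rm_def Rt_def by simp
  have mut_le: "mut \<le> \<mu>" unfolding mut_def mu_tilde_def by simp
  have chi: "chiK K Rt < \<mu>" using chiK_le[of K "y t" Rt] Rt_def t(3) mut_le by simp
  have inset: "Rt \<in> {t. t > \<alpha>' \<and> t \<le> Rmax K \<and> chiK K t < \<mu>}" using Rt_ge xinf Rt_le chi by simp
  have rle: "r_mu K \<mu> \<alpha>' \<le> ereal Rt" unfolding r_mu_def by (rule Inf_lower) (use inset in blast)
  obtain r where r: "r_mu K \<mu> \<alpha>' = ereal r"
  proof (cases "r_mu K \<mu> \<alpha>'")
    case (real r') then show ?thesis using that by blast
  next
    case PInf then show ?thesis using rle by simp
  next
    case MInf then show ?thesis using rmu by simp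
  qed
  have r_gt: "r > \<alpha> + lam" using rmu r by simp
  have r_le: "r \<le> Rt" using rle r by simp
  have mut_eq: "mut = min \<mu> (sqrt (1 - (lam / (r - \<alpha>))\<^sup>2))" unfolding mut_def mu_tilde_def using r by simp
  define X where "X = 1 - (lam / (r - \<alpha>))\<^sup>2"
  have ng0: "ng \<ge> 0" using ng_def by simp
  have ngX: "ng < sqrt X" using t(3) mut_eq ng_def X_def by simp
  then have "X > 0" using ng0 by (metis le_less_trans not_le real_sqrt_le_0_iff)
  have ng2: "ng\<^sup>2 < X"
  proof -
    have "ng\<^sup>2 < (sqrt X)\<^sup>2" using ngX ng0 by (intro power_strict_mono) auto
    then show ?thesis using \<open>X > 0\<close> by simp
  qed
  define Ft where "Ft = FK K (y t)"
  have Ft0: "Ft \<ge> 0" using FK_nonneg[OF Kc Kne] Ft_def by simp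
  have ngu: "ng = norm (y t - mcenter (ThetaK K (y t))) / Rt" using grad_norm ng_def Rt_def by simp
  have Ft2: "Ft\<^sup>2 = Rt\<^sup>2 * (1 - ng\<^sup>2)"
  proof -
    have "Ft\<^sup>2 + (norm (y t - mcenter (ThetaK K (y t))))\<^sup>2 = Rt\<^sup>2" using FK_eq[OF Kc Kne] Ft_def Rt_def by simp
    moreover have "norm (y t - mcenter (ThetaK K (y t))) = ng * Rt" using ngu Rtpos by simp
    ultimately show ?thesis by (simp add: power_mult_distrib algebra_simps)
  qed
  have ramp: "r - \<alpha> > 0" using r_gt lam by simp
  have Ft_gt: "Ft > Rt * (lam / (r - \<alpha>))"
  proof -
    have "(Rt * (lam / (r - \<alpha>)))\<^sup>2 = Rt\<^sup>2 * (lam / (r - \<alpha>))\<^sup>2" by (rule power_mult_distrib)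
    also have "\<dots> < Rt\<^sup>2 * (1 - ng\<^sup>2)" using ng2 X_def Rtpos by (intro mult_strict_left_mono) auto
    finally have "(Rt * (lam / (r - \<alpha>)))\<^sup>2 < Ft\<^sup>2" using Ft2 by simp
    then show ?thesis using Ft0 by (rule power2_less_imp_less)
  qed
  define RT where "RT = RK K (y T)"
  have tT: "t \<le> T" using t by simp
  have RT_ge: "RT \<ge> Rt" using tf.R_mono[OF t(1) tT] RT_def Rt_def by simp
  have FT_ge: "FK K (y T) \<ge> Ft" using tf.F_mono_y[OF t(1) tT] Ft_def by simp
  have Rt_al: "Rt > \<alpha>" using r_le r_gt lam by simp
  have RT_al: "RT > \<alpha>" using RT_ge Rt_al by simp
  have RTpos: "RT > 0" using RT_al al by simp
  have off: "FK (offset K \<alpha>) (y T) \<ge> FK K (y T) * ((RT - \<alpha>) / RT)"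
    using offset_F[OF Kc Kne al] RT_al RT_def by simp
  have fr1: "(RT - \<alpha>) / RT \<ge> (Rt - \<alpha>) / Rt"
  proof -
    have "\<alpha> / RT \<le> \<alpha> / Rt" using al RT_ge Rtpos by (intro divide_left_mono) auto
    then show ?thesis using RTpos Rtpos by (simp add: diff_divide_distrib)
  qed
  have fr0: "(Rt - \<alpha>) / Rt > 0" using Rt_al Rtpos by simp
  have "FK K (y T) * ((RT - \<alpha>) / RT) \<ge> Ft * ((Rt - \<alpha>) / Rt)"
    using FT_ge fr1 Ft0 fr0 by (intro mult_mono) auto
  moreover have "Ft * ((Rt - \<alpha>) / Rt) > Rt * (lam / (r - \<alpha>)) * ((Rt - \<alpha>) / Rt)"
    using Ft_gt fr0 by (intro mult_strict_right_mono) auto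
  moreover have "Rt * (lam / (r - \<alpha>)) * ((Rt - \<alpha>) / Rt) = lam * ((Rt - \<alpha>) / (r - \<alpha>))"
    using Rtpos ramp by (simp add: field_simps)
  moreover have "(Rt - \<alpha>) / (r - \<alpha>) \<ge> 1" using r_le ramp by simp
  then have "lam * ((Rt - \<alpha>) / (r - \<alpha>)) \<ge> lam * 1" using lam by (intro mult_left_mono) auto
  ultimately have "FK (offset K \<alpha>) (y T) \<ge> lam" using off by linarith
  then show "q \<in> axis K lam \<alpha>" unfolding axis_def q y_def by simp
qed


end
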